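(* Let $S\subseteq G$ and $T:=G\setminus S$ be such that $t\sqsubset s$ for all $t\in T$ and $s\in S$. Then for all $f\in\mathcal{L}(\mathcal{X}_G)$, $$\underline{E}^{\mathrm{irr}}_G(f(X_G))=\underline{E}^{\mathrm{irr}}_T\big(g(X_T)\big),$$ where $g$ is the function on $\mathcal{X}_T$ defined by $g(x_T):=\underline{E}^{\mathrm{irr}}_{S\mid x_{P(S)}}\big(f(X_S,x_T)\big)$, with $x_{P(S)}$ the restriction of $x_T$ to $P(S)$ (note $P(S)\subseteq T$ and $P(T)=\emptyset$ under the hypothesis).
   Context: Setting: $G$ is a finite set of nodes forming a DAG; node $s$ carries a variable $X_s$ with finite nonempty state space $\mathcal{X}_s$; $\mathcal{X}_S=\times_{s\in S}\mathcal{X}_s$; $\mathcal{L}(\mathcal{X}_S)$ denotes real-valued functions on $\mathcal{X}_S$. $P(s)$: parents of $s$; $s\sqsubset v$: there is a directed path of positive length from $s$ to $v$; $D(s)=\{v:s\sqsubset v\}$; $N(s)=G\setminus(\{s\}\cup D(s))$. For $K\subseteq G$: $P(K)=(\bigcup_{s\in K}P(s))\setminus K$. Local models: nonempty closed convex sets $\mathcal{M}_{s\mid x_{P(s)}}$ of probability mass functions on $\mathcal{X}_s$. Full conditional probability measure on finite $\Omega$: $(A,B)\mapsto P(A\mid B)$ ($B\ne\emptyset$) with (F1) $P(\cdot\mid B)$ a probability measure, $P(B\mid B)=1$; (F2) $P(A\cap C\mid B)=P(A\mid C\cap B)P(C\mid B)$ if $C\cap B\neq\emptyset$. Irrelevant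 natural extension $\mathcal{F}^{\mathrm{irr}}_G$: all full conditional probability measures $P$ on $\mathcal{X}_G$ with $P(X_s\mid x_{N(s)})\in\mathcal{M}_{s\mid x_{P(s)}}$ for all $s,x_{N(s)}$. Unconditional lower expectation: $\underline{E}^{\mathrm{irr}}_G(f(X_G))=\inf\{\sum_{z_G}f(z_G)P(z_G):P\in\mathcal{F}^{\mathrm{irr}}_G\}$. Sub-network: for $K\subseteq G$ and fixed $x_{P(K)}$, the credal network on the DAG restricted to $K$ with local credal sets $\mathcal{M}_{s\mid(z_{P(s)\cap K},x_{P(s)\setminus K})}$; its irrelevant natural extension's lower expectation is $\underline{E}^{\mathrm{irr}}_{K\mid x_{P(K)}}$, written $\underline{E}^{\mathrm{irr}}_K$ when $P(K)=\emptyset$. *)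

theory Defs
  imports "HOL-Analysis.Analysis"
begin

text \<open>A DAG on the node set G is given by a parent map Pa; its edges are (p,c) with c in G, p in Pa c.
  Assignments on a set S of nodes are extensional functions, i.e. elements of PiE S Xs.\<close>

definition dag_edges :: "'n set \<Rightarrow> ('n \<Rightarrow> 'n set) \<Rightarrow> ('n \<times> 'n) set" where
  "dag_edges G Pa = {(p, c). c \<in> G \<and> p \<in> Pa c}"

definition strictly_below :: "'n set \<Rightarrow> ('n \<Rightarrow> 'n set) \<Rightarrow> 'n \<Rightarrow> 'n \<Rightarrow> bool" where
  "strictly_below G Pa s v \<longleftrightarrow> (s, v) \<in> (dag_edges G Pa)\<^sup>+"

definition descendants :: "'n set \<Rightarrow> ('n \<Rightarrow> 'n set) \<Rightarrow> 'n \<Rightarrow> 'n set" where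
  "descendants G Pa s = {v. strictly_below G Pa s v}"

definition nondesc :: "'n set \<Rightarrow> ('n \<Rightarrow> 'n set) \<Rightarrow> 'n \<Rightarrow> 'n set" where
  "nondesc G Pa s = G - ({s} \<union> descendants G Pa s)"

definition parents_of_set :: "('n \<Rightarrow> 'n set) \<Rightarrow> 'n set \<Rightarrow> 'n set" where
  "parents_of_set Pa K = (\<Union>s\<in>K. Pa s) - K"

definition is_pmf_on :: "'v set \<Rightarrow> ('v \<Rightarrow> real) \<Rightarrow> bool" where
  "is_pmf_on A p \<longleftrightarrow> (\<forall>v. 0 \<le> p v) \<and> (\<forall>v. v \<notin> A \<longrightarrow> p v = 0) \<and> sum p A = 1"

definition convex_fun_set :: "('v \<Rightarrow> real) set \<Rightarrow> bool" where
  "convex_fun_set C \<longleftrightarrow> (\<forall>p\<in>C. \<forall>q\<in>C. \<forall>a::real. 0 \<le> a \<and> a \<le> 1 \<longrightarrow>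
      (\<lambda>v. a * p v + (1 - a) * q v) \<in> C)"

definition full_cond_prob :: "'w set \<Rightarrow> ('w set \<Rightarrow> 'w set \<Rightarrow> real) \<Rightarrow> bool" where
  "full_cond_prob \<Omega> P \<longleftrightarrow>
     (\<forall>B. B \<subseteq> \<Omega> \<longrightarrow> B \<noteq> {} \<longrightarrow>
        (\<forall>A. A \<subseteq> \<Omega> \<longrightarrow> 0 \<le> P A B) \<and> P \<Omega> B = 1 \<and>
        (\<forall>A A'. A \<subseteq> \<Omega> \<longrightarrow> A' \<subseteq> \<Omega> \<longrightarrow> A \<inter> A' = {} \<longrightarrow> P (A \<union> A') B = P A B + P A' B) \<and>
        P B B = 1) \<and>
     (\<forall>A B C. A \<subseteq> \<Omega> \<longrightarrow> B \<subseteq> \<Omega> \<longrightarrow> C \<subseteq> \<Omega> \<longrightarrow> C \<inter> B \<noteq> {} \<longrightarrow>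
        P (A \<inter> C) B = P A (C \<inter> B) * P C B)"

definition cond_event :: "('n \<Rightarrow> 'v) set \<Rightarrow> 'n set \<Rightarrow> ('n \<Rightarrow> 'v) \<Rightarrow> ('n \<Rightarrow> 'v) set" where
  "cond_event \<Omega> S x = {z \<in> \<Omega>. \<forall>t\<in>S. z t = x t}"

text \<open>M s x is the local model of s given parent values x
  (x an assignment on Pa s).\<close>
definition credal_network :: "'n set \<Rightarrow> ('n \<Rightarrow> 'n set) \<Rightarrow> ('n \<Rightarrow> 'v set) \<Rightarrow>
    ('n \<Rightarrow> ('n \<Rightarrow> 'v) \<Rightarrow> ('v \<Rightarrow> real) set) \<Rightarrow> bool" where
  "credal_network G Pa Xs M \<longleftrightarrow>
     finite G \<and>
     (\<forall>s\<in>G. Pa s \<subseteq> G) \<and>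
     (\<forall>s\<in>G. \<not> strictly_below G Pa s s) \<and>
     (\<forall>s\<in>G. finite (Xs s) \<and> Xs s \<noteq> {}) \<and>
     (\<forall>s\<in>G. \<forall>x\<in>PiE (Pa s) Xs.
        M s x \<noteq> {} \<and> closed (M s x) \<and> convex_fun_set (M s x) \<and>
        (\<forall>p\<in>M s x. is_pmf_on (Xs s) p))"

definition irr_ext :: "'n set \<Rightarrow> ('n \<Rightarrow> 'n set) \<Rightarrow> ('n \<Rightarrow> 'v set) \<Rightarrow>
    ('n \<Rightarrow> ('n \<Rightarrow> 'v) \<Rightarrow> ('v \<Rightarrow> real) set) \<Rightarrow> (('n \<Rightarrow> 'v) set \<Rightarrow> ('n \<Rightarrow> 'v) set \<Rightarrow> real) set" where
  "irr_ext G Pa Xs M = {P. full_cond_prob (PiE G Xs) P \<and>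
     (\<forall>s\<in>G. \<forall>x\<in>PiE (nondesc G Pa s) Xs.
        (\<lambda>v. if v \<in> Xs s then
                P {z \<in> PiE G Xs. z s = v} (cond_event (PiE G Xs) (nondesc G Pa s) x)
              else 0)
        \<in> M s (restrict x (Pa s)))}"

definition lower_exp_irr :: "'n set \<Rightarrow> ('n \<Rightarrow> 'n set) \<Rightarrow> ('n \<Rightarrow> 'v set) \<Rightarrow>
    ('n \<Rightarrow> ('n \<Rightarrow> 'v) \<Rightarrow> ('v \<Rightarrow> real) set) \<Rightarrow> (('n \<Rightarrow> 'v) \<Rightarrow> real) \<Rightarrow> real" where
  "lower_exp_irr G Pa Xs M f =
     Inf {(\<Sum>z\<in>PiE G Xs. f z * P {z} (PiE G Xs)) | P. P \<in> irr_ext G Pa Xs M}"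

text \<open>Lower expectation of the sub-network on K, given the values x on P(K):
  DAG restricted to K, local models M s (z on Pa s inter K, x on Pa s minus K).\<close>
definition sub_lower_exp :: "'n set \<Rightarrow> ('n \<Rightarrow> 'n set) \<Rightarrow> ('n \<Rightarrow> 'v set) \<Rightarrow>
    ('n \<Rightarrow> ('n \<Rightarrow> 'v) \<Rightarrow> ('v \<Rightarrow> real) set) \<Rightarrow> 'n set \<Rightarrow> ('n \<Rightarrow> 'v) \<Rightarrow>
    (('n \<Rightarrow> 'v) \<Rightarrow> real) \<Rightarrow> real" where
  "sub_lower_exp G Pa Xs M K x f =
     lower_exp_irr K (\<lambda>s. Pa s \<inter> K) Xs
       (\<lambda>s y. M s (restrict (\<lambda>t. if t \<in> K then y t else x t) (Pa s))) f"

end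

theory Submission
  imports Defs
begin

definition lpsP :: "(nat \<Rightarrow> 'w \<Rightarrow> real) \<Rightarrow> 'w set \<Rightarrow> 'w set \<Rightarrow> real" where
  "lpsP l A B = (let k = LEAST k. 0 < sum (l k) B in sum (l k) (A \<inter> B) / sum (l k) B)"

lemma lps_eq:
  fixes l :: "nat \<Rightarrow> 'w \<Rightarrow> real"
  assumes "\<forall>k<k0. sum (l k) B = 0" "0 < sum (l k0) B"
  shows "lpsP l A B = sum (l k0) (A \<inter> B) / sum (l k0) B"
proof -
  have "(LEAST k. 0 < sum (l k) B) = k0"
    by (rule Least_equality) (use assms in \<open>auto simp: not_less[symmetric]\<close>)
  then show ?thesis unfolding lpsP_def Let_def by simp
qed

lemma lps_first:
  fixes l :: "nat \<Rightarrow> 'w \<Rightarrow> real"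
  assumes nn: "\<And>k w. 0 \<le> l k w" and cov: "\<forall>w\<in>\<Omega>. \<exists>k. 0 < l k w"
    and fin: "finite \<Omega>" and B: "B \<subseteq> \<Omega>" "B \<noteq> {}"
  shows "0 < sum (l (LEAST k. 0 < sum (l k) B)) B \<and>
         (\<forall>k < (LEAST k. 0 < sum (l k) B). \<forall>w\<in>B. l k w = 0)"
proof -
  obtain w where w: "w \<in> B" using B by auto
  then obtain k where k: "0 < l k w" using cov B by auto
  have finB: "finite B" using fin B finite_subset by auto
  have "0 < sum (l k) B"
    by (rule sum_pos2[OF finB w, of "l k"]) (use nn k in auto)
  then have ex: "\<exists>k. 0 < sum (l k) B" by auto
  show ?thesis
  proof
    show "0 < sum (l (LEAST k. 0 < sum (l k) B)) B" using LeastI_ex[OF ex] .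
    show "\<forall>k<(LEAST k. 0 < sum (l k) B). \<forall>w\<in>B. l k w = 0"
    proof (intro allI impI ballI)
      fix k' w' assume "k' < (LEAST k. 0 < sum (l k) B)" "w' \<in> B"
      then have "\<not> 0 < sum (l k') B" using not_less_Least by blast
      then have "sum (l k') B = 0" using sum_nonneg[of B "l k'"] nn by force
      then show "l k' w' = 0" using sum_nonneg_eq_0_iff[OF finB] nn \<open>w' \<in> B\<close> by blast
    qed
  qed
qed

lemma lps_fcp:
  fixes l :: "nat \<Rightarrow> 'w \<Rightarrow> real"
  assumes nn: "\<And>k w. 0 \<le> l k w" and cov: "\<forall>w\<in>\<Omega>. \<exists>k. 0 < l k w"
    and fin: "finite \<Omega>"
  shows "full_cond_prob \<Omega> (lpsP l)"
proof -
  have key: "\<And>B. B \<subseteq> \<Omega> \<Longrightarrow> B \<noteq> {} \<Longrightarrow> \<exists>k. (\<forall>k'<k. sum (l k') B = 0) \<and> 0 < sum (l k) B"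
  proof -
    fix B assume B: "B \<subseteq> \<Omega>" "B \<noteq> {}"
    have finB: "finite B" using fin B finite_subset by auto
    define k0 where "k0 = (LEAST k. 0 < sum (l k) B)"
    note L = lps_first[OF nn cov fin B, folded k0_def]
    have a: "0 < sum (l k0) B" using L by (rule conjunct1)
    have b: "\<forall>k<k0. \<forall>w\<in>B. l k w = 0" using L by (rule conjunct2)
    have "\<forall>k'<k0. sum (l k') B = 0"
    proof (intro allI impI)
      fix k' assume "k' < k0"
      then show "sum (l k') B = 0" using b by (intro sum.neutral) blast
    qed
    then show "\<exists>k. (\<forall>k'<k. sum (l k') B = 0) \<and> 0 < sum (l k) B" using a by blast
  qed
  have P1: "\<forall>B. B \<subseteq> \<Omega> \<longrightarrow> B \<noteq> {} \<longrightarrow>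
        (\<forall>A. A \<subseteq> \<Omega> \<longrightarrow> 0 \<le> lpsP l A B) \<and> lpsP l \<Omega> B = 1 \<and>
        (\<forall>A A'. A \<subseteq> \<Omega> \<longrightarrow> A' \<subseteq> \<Omega> \<longrightarrow> A \<inter> A' = {} \<longrightarrow> lpsP l (A \<union> A') B = lpsP l A B + lpsP l A' B) \<and>
        lpsP l B B = 1"
  proof (intro allI impI)
    fix B assume B: "B \<subseteq> \<Omega>" "B \<noteq> {}"
    have finB: "finite B" using fin B finite_subset by auto
    from key[OF B] obtain k where k: "\<forall>k'<k. sum (l k') B = 0" "0 < sum (l k) B" by blast
    note eq = lps_eq[OF k]
    have "\<forall>A A'. A \<subseteq> \<Omega> \<longrightarrow> A' \<subseteq> \<Omega> \<longrightarrow> A \<inter> A' = {} \<longrightarrow>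
           lpsP l (A \<union> A') B = lpsP l A B + lpsP l A' B"
    proof (intro allI impI)
      fix A A' assume "A \<subseteq> \<Omega>" "A' \<subseteq> \<Omega>" "A \<inter> A' = {}"
      then have "sum (l k) ((A \<union> A') \<inter> B) = sum (l k) (A \<inter> B) + sum (l k) (A' \<inter> B)"
        using finB by (subst sum.union_disjoint[symmetric]) (auto intro: sum.cong)
      then show "lpsP l (A \<union> A') B = lpsP l A B + lpsP l A' B"
        by (simp add: eq add_divide_distrib)
    qed
    then show "(\<forall>A. A \<subseteq> \<Omega> \<longrightarrow> 0 \<le> lpsP l A B) \<and> lpsP l \<Omega> B = 1 \<and>
        (\<forall>A A'. A \<subseteq> \<Omega> \<longrightarrow> A' \<subseteq> \<Omega> \<longrightarrow> A \<inter> A' = {} \<longrightarrow> lpsP l (A \<union> A') B = lpsP l A B + lpsP l A' B) \<and>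
        lpsP l B B = 1"
      using k B by (auto simp: eq Int_absorb1 intro!: divide_nonneg_pos sum_nonneg nn)
  qed
  have P2: "\<forall>A B C. A \<subseteq> \<Omega> \<longrightarrow> B \<subseteq> \<Omega> \<longrightarrow> C \<subseteq> \<Omega> \<longrightarrow> C \<inter> B \<noteq> {} \<longrightarrow>
        lpsP l (A \<inter> C) B = lpsP l A (C \<inter> B) * lpsP l C B"
  proof (intro allI impI)
    fix A B C assume A: "A \<subseteq> \<Omega>" and B: "B \<subseteq> \<Omega>" and C: "C \<subseteq> \<Omega>" and CB: "C \<inter> B \<noteq> {}"
    have Bne: "B \<noteq> {}" using CB by auto
    have finB: "finite B" using fin B finite_subset by auto
    from key[OF B Bne] obtain k where k: "\<forall>k'<k. sum (l k') B = 0" "0 < sum (l k) B" by blast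
    have mono: "\<And>k X. X \<subseteq> B \<Longrightarrow> sum (l k) X \<le> sum (l k) B"
      using finB by (intro sum_mono2) (auto intro: nn)
    show "lpsP l (A \<inter> C) B = lpsP l A (C \<inter> B) * lpsP l C B"
    proof (cases "0 < sum (l k) (C \<inter> B)")
      case True
      have k2: "\<forall>k'<k. sum (l k') (C \<inter> B) = 0"
        using k(1) mono[of "C \<inter> B"] sum_nonneg[of "C \<inter> B"] nn by (metis inf_le2 order_antisym)
      show ?thesis using True k
        by (simp add: lps_eq[OF k] lps_eq[OF k2 True] Int_assoc)
    next
      case False
      then have z: "sum (l k) (C \<inter> B) = 0" using sum_nonneg[of "C \<inter> B" "l k"] nn by force
      have "sum (l k) (A \<inter> C \<inter> B) \<le> sum (l k) (C \<inter> B)"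
        using finB by (intro sum_mono2) (auto intro: nn)
      moreover have "0 \<le> sum (l k) (A \<inter> C \<inter> B)" by (intro sum_nonneg nn)
      ultimately have "sum (l k) (A \<inter> C \<inter> B) = 0" using z by linarith
      then show ?thesis by (simp add: lps_eq[OF k] z Int_assoc)
    qed
  qed
  show ?thesis unfolding full_cond_prob_def by (rule conjI[OF P1 P2])
qed

lemma fcpD1:
  assumes "full_cond_prob \<Omega> P" "B \<subseteq> \<Omega>" "B \<noteq> {}"
  shows "\<And>A. A \<subseteq> \<Omega> \<Longrightarrow> 0 \<le> P A B" "P \<Omega> B = 1" "P B B = 1"
    "\<And>A A'. A \<subseteq> \<Omega> \<Longrightarrow> A' \<subseteq> \<Omega> \<Longrightarrow> A \<inter> A' = {} \<Longrightarrow> P (A \<union> A') B = P A B + P A' B"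
proof -
  have H: "(\<forall>A. A \<subseteq> \<Omega> \<longrightarrow> 0 \<le> P A B) \<and> P \<Omega> B = 1 \<and>
        (\<forall>A A'. A \<subseteq> \<Omega> \<longrightarrow> A' \<subseteq> \<Omega> \<longrightarrow> A \<inter> A' = {} \<longrightarrow> P (A \<union> A') B = P A B + P A' B) \<and>
        P B B = 1"
  proof -
    have "\<forall>B. B \<subseteq> \<Omega> \<longrightarrow> B \<noteq> {} \<longrightarrow> (\<forall>A. A \<subseteq> \<Omega> \<longrightarrow> 0 \<le> P A B) \<and> P \<Omega> B = 1 \<and>
        (\<forall>A A'. A \<subseteq> \<Omega> \<longrightarrow> A' \<subseteq> \<Omega> \<longrightarrow> A \<inter> A' = {} \<longrightarrow> P (A \<union> A') B = P A B + P A' B) \<and>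
        P B B = 1"
      using assms(1) unfolding full_cond_prob_def by (rule conjunct1)
    from this[rule_format, OF assms(2,3)] show ?thesis .
  qed
  then show "\<And>A. A \<subseteq> \<Omega> \<Longrightarrow> 0 \<le> P A B" "P \<Omega> B = 1" "P B B = 1"
    "\<And>A A'. A \<subseteq> \<Omega> \<Longrightarrow> A' \<subseteq> \<Omega> \<Longrightarrow> A \<inter> A' = {} \<Longrightarrow> P (A \<union> A') B = P A B + P A' B"
    by auto
qed

lemma fcpD2:
  assumes "full_cond_prob \<Omega> P" "A \<subseteq> \<Omega>" "B \<subseteq> \<Omega>" "C \<subseteq> \<Omega>" "C \<inter> B \<noteq> {}"
  shows "P (A \<inter> C) B = P A (C \<inter> B) * P C B"
proof -
  have "\<forall>A B C. A \<subseteq> \<Omega> \<longrightarrow> B \<subseteq> \<Omega> \<longrightarrow> C \<subseteq> \<Omega> \<longrightarrow> C \<inter> B \<noteq> {} \<longrightarrow>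
        P (A \<inter> C) B = P A (C \<inter> B) * P C B"
    using assms(1) unfolding full_cond_prob_def by (rule conjunct2)
  then show ?thesis using assms(2-5) by simp
qed

lemma fcp_empty:
  assumes "full_cond_prob \<Omega> P" "B \<subseteq> \<Omega>" "B \<noteq> {}"
  shows "P {} B = 0"
  using fcpD1(4)[OF assms, of "{}" "{}"] by simp

lemma fcp_sum:
  assumes P: "full_cond_prob \<Omega> P" and fin: "finite \<Omega>" and B: "B \<subseteq> \<Omega>" "B \<noteq> {}"
    and A: "A \<subseteq> \<Omega>"
  shows "P A B = (\<Sum>w\<in>A. P {w} B)"
proof -
  have "finite A" using A fin finite_subset by auto
  then show ?thesis using A
  proof (induction A rule: finite_induct)
    case empty
    then show ?case using fcp_empty[OF P B] by simp
  next
    case (insert x F)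
    have "P (insert x F) B = P ({x} \<union> F) B" by simp
    also have "\<dots> = P {x} B + P F B"
      using insert by (intro fcpD1(4)[OF P B]) auto
    finally show ?case using insert by simp
  qed
qed

lemma fcp_int:
  assumes P: "full_cond_prob \<Omega> P" and A: "A \<subseteq> \<Omega>" and B: "B \<subseteq> \<Omega>" "B \<noteq> {}"
  shows "P (A \<inter> B) B = P A B"
  using fcpD2[OF P A B(1) B(1)] B(2) fcpD1(3)[OF P B] by simp

lemma fcp_single_bounds:
  assumes P: "full_cond_prob \<Omega> P" and fin: "finite \<Omega>" and z: "z \<in> \<Omega>"
  shows "0 \<le> P {z} \<Omega> \<and> P {z} \<Omega> \<le> 1"
proof -
  have ne: "\<Omega> \<noteq> {}" using z by auto
  have "P \<Omega> \<Omega> = P {z} \<Omega> + P (\<Omega> - {z}) \<Omega>"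
    using fcpD1(4)[OF P order_refl ne, of "{z}" "\<Omega> - {z}"] z by (simp add: insert_absorb)
  moreover have "0 \<le> P (\<Omega> - {z}) \<Omega>" "0 \<le> P {z} \<Omega>" using fcpD1(1)[OF P order_refl ne] z by auto
  ultimately show ?thesis using fcpD1(2)[OF P order_refl ne] by linarith
qed

primrec layerset :: "'w set \<Rightarrow> ('w set \<Rightarrow> 'w set \<Rightarrow> real) \<Rightarrow> nat \<Rightarrow> 'w set" where
  "layerset \<Omega> P 0 = \<Omega>"
| "layerset \<Omega> P (Suc k) = {w \<in> layerset \<Omega> P k. P {w} (layerset \<Omega> P k) \<le> 0}"

definition layerfun :: "'w set \<Rightarrow> ('w set \<Rightarrow> 'w set \<Rightarrow> real) \<Rightarrow> nat \<Rightarrow> 'w \<Rightarrow> real" where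
  "layerfun \<Omega> P k w = (if w \<in> layerset \<Omega> P k then P {w} (layerset \<Omega> P k) else 0)"

definition is_rep :: "'w set \<Rightarrow> ('w set \<Rightarrow> 'w set \<Rightarrow> real) \<Rightarrow> (nat \<Rightarrow> 'w \<Rightarrow> real) \<Rightarrow> bool" where
  "is_rep \<Omega> P l \<longleftrightarrow> (\<forall>k w. 0 \<le> l k w) \<and> (\<forall>w\<in>\<Omega>. \<exists>k<card \<Omega>. 0 < l k w) \<and>
     (\<forall>w\<in>\<Omega>. l 0 w = P {w} \<Omega>) \<and>
     (\<forall>A B. A \<subseteq> \<Omega> \<longrightarrow> B \<subseteq> \<Omega> \<longrightarrow> B \<noteq> {} \<longrightarrow> P A B = lpsP l A B)"

lemma rep_nn: "is_rep \<Omega> P l \<Longrightarrow> 0 \<le> l k w"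
  unfolding is_rep_def by (drule conjunct1) simp
lemma rep_cov: "is_rep \<Omega> P l \<Longrightarrow> w \<in> \<Omega> \<Longrightarrow> \<exists>k<card \<Omega>. 0 < l k w"
  unfolding is_rep_def by (drule conjunct2, drule conjunct1) simp
lemma rep_l0: "is_rep \<Omega> P l \<Longrightarrow> w \<in> \<Omega> \<Longrightarrow> l 0 w = P {w} \<Omega>"
  unfolding is_rep_def by (drule conjunct2, drule conjunct2, drule conjunct1) simp
lemma rep_eq: "is_rep \<Omega> P l \<Longrightarrow> A \<subseteq> \<Omega> \<Longrightarrow> B \<subseteq> \<Omega> \<Longrightarrow> B \<noteq> {} \<Longrightarrow> P A B = lpsP l A B"
  unfolding is_rep_def by (drule conjunct2, drule conjunct2, drule conjunct2) simp

lemma layerset_sub: "layerset \<Omega> P k \<subseteq> \<Omega>"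
  by (induction k) auto

lemma layerset_Suc_sub: "layerset \<Omega> P (Suc k) \<subseteq> layerset \<Omega> P k"
  by auto

lemma fcp_rep:
  assumes P: "full_cond_prob \<Omega> P" and fin: "finite \<Omega>"
  shows "is_rep \<Omega> P (layerfun \<Omega> P)"
proof -
  let ?L = "layerset \<Omega> P"
  let ?l = "layerfun \<Omega> P"
  have Lfin: "finite (?L k)" for k using layerset_sub fin finite_subset by metis
  have nn: "0 \<le> ?l k w" for k w
  proof (cases "w \<in> ?L k")
    case True
    then have "?L k \<noteq> {}" by auto
    have "0 \<le> P {w} (?L k)"
      using fcpD1(1)[OF P layerset_sub \<open>?L k \<noteq> {}\<close>, of "{w}"] True layerset_sub[of \<Omega> P k] by auto
    then show ?thesis using True unfolding layerfun_def by auto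
  qed (simp add: layerfun_def)
  have shrink: "card (?L (Suc k)) < card (?L k)" if ne: "?L k \<noteq> {}" for k
  proof -
    have "(\<Sum>w\<in>?L k. P {w} (?L k)) = 1"
      using fcp_sum[OF P fin layerset_sub ne layerset_sub] fcpD1(3)[OF P layerset_sub ne] by simp
    then obtain w where w: "w \<in> ?L k" "0 < P {w} (?L k)"
      by (metis (no_types, lifting) not_le sum_nonpos zero_less_one)
    then have "w \<notin> ?L (Suc k)" by auto
    then have "?L (Suc k) \<subset> ?L k" using w(1) layerset_Suc_sub[of \<Omega> P k] by blast
    then show ?thesis using Lfin psubset_card_mono by blast
  qed
  have cardL: "card (?L k) \<le> card \<Omega> - k" for k
  proof (induction k)
    case 0 then show ?case by simp
  next
    case (Suc k)
    show ?case
    proof (cases "?L k = {}")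
      case True
      then have "?L (Suc k) = {}" using layerset_Suc_sub[of \<Omega> P k] by blast
      then show ?thesis by (metis card.empty zero_le)
    next
      case False
      then show ?thesis using shrink[OF False] Suc by linarith
    qed
  qed
  have Lend: "?L (card \<Omega>) = {}"
    using cardL[of "card \<Omega>"] Lfin card_0_eq by simp
  have cov: "\<exists>k<card \<Omega>. 0 < ?l k w" if w: "w \<in> \<Omega>" for w
  proof -
    have ex: "\<exists>m. w \<notin> ?L m" using Lend by blast
    define m where "m = (LEAST m. w \<notin> ?L m)"
    have m1: "w \<notin> ?L m" unfolding m_def using LeastI_ex[OF ex] .
    have m0: "m \<noteq> 0"
    proof
      assume "m = 0" then show False using m1 w by simp
    qed
    then obtain k where k: "m = Suc k" using not0_implies_Suc by blast
    have wk: "w \<in> ?L k" using not_less_Least[of k "\<lambda>m. w \<notin> ?L m"] k unfolding m_def by auto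
    have "m \<le> card \<Omega>" unfolding m_def using Lend by (intro Least_le) simp
    then have "k < card \<Omega>" using k by simp
    moreover have "0 < ?l k w" using wk m1 k unfolding layerfun_def by auto
    ultimately show ?thesis by blast
  qed
  have cov': "\<forall>w\<in>\<Omega>. \<exists>k. 0 < ?l k w" using cov by blast
  have rep: "P A B = lpsP ?l A B" if A: "A \<subseteq> \<Omega>" and B: "B \<subseteq> \<Omega>" "B \<noteq> {}" for A B
  proof -
    define k0 where "k0 = (LEAST k. 0 < sum (?l k) B)"
    note L = lps_first[OF nn cov' fin B, folded k0_def]
    have pos: "0 < sum (?l k0) B" using L by (rule conjunct1)
    have zero: "\<forall>k<k0. \<forall>w\<in>B. ?l k w = 0" using L by (rule conjunct2)
    have sub: "k \<le> k0 \<Longrightarrow> B \<subseteq> ?L k" for k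
    proof (induction k)
      case 0 then show ?case using B by simp
    next
      case (Suc k)
      then have IH: "B \<subseteq> ?L k" and lt: "k < k0" by auto
      show ?case
      proof
        fix w assume "w \<in> B"
        then have "?l k w = 0" using zero lt by blast
        then show "w \<in> ?L (Suc k)" using IH \<open>w \<in> B\<close> unfolding layerfun_def by auto
      qed
    qed
    have BL: "B \<subseteq> ?L k0" using sub by simp
    have Lne: "?L k0 \<noteq> {}" using BL B by auto
    have eqs: "sum (?l k0) X = P X (?L k0)" if "X \<subseteq> B" for X
    proof -
      have "P X (?L k0) = (\<Sum>w\<in>X. P {w} (?L k0))"
        using fcp_sum[OF P fin layerset_sub Lne] that B by auto
      also have "\<dots> = sum (?l k0) X" using that BL unfolding layerfun_def by (intro sum.cong) auto
      finally show ?thesis by simp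
    qed
    have "P (A \<inter> B) (?L k0) = P A (B \<inter> ?L k0) * P B (?L k0)"
      using fcpD2[OF P A layerset_sub B(1)] BL B by (auto simp: Int_absorb2)
    then have "P A B = P (A \<inter> B) (?L k0) / P B (?L k0)"
      using BL pos eqs[of B] by (simp add: Int_absorb2)
    also have "\<dots> = sum (?l k0) (A \<inter> B) / sum (?l k0) B" using eqs by simp
    also have "\<dots> = lpsP ?l A B" unfolding lpsP_def k0_def Let_def by simp
    finally show ?thesis .
  qed
  have l0: "?l 0 w = P {w} \<Omega>" if "w \<in> \<Omega>" for w using that unfolding layerfun_def by simp
  show ?thesis unfolding is_rep_def using nn cov l0 rep by blast
qed

lemma rep_sum0:
  assumes P: "full_cond_prob \<Omega> P" and fin: "finite \<Omega>" and ne: "\<Omega> \<noteq> {}" and r: "is_rep \<Omega> P l"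
  shows "sum (l 0) \<Omega> = 1"
proof -
  have l0: "\<forall>w\<in>\<Omega>. l 0 w = P {w} \<Omega>" using rep_l0[OF r] by blast
  have "sum (l 0) \<Omega> = (\<Sum>w\<in>\<Omega>. P {w} \<Omega>)" using l0 by (intro sum.cong) auto
  also have "\<dots> = P \<Omega> \<Omega>" using fcp_sum[OF P fin order_refl ne order_refl] by simp
  finally show ?thesis using fcpD1(2)[OF P order_refl ne] by simp
qed

lemma rep_first:
  fixes l :: "nat \<Rightarrow> 'w \<Rightarrow> real"
  assumes r: "is_rep \<Omega> P l" and fin: "finite \<Omega>" and B: "B \<subseteq> \<Omega>" "B \<noteq> {}"
  obtains k0 where "0 < sum (l k0) B" "\<forall>k<k0. \<forall>w\<in>B. l k w = 0" "k0 < card \<Omega>"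
    "\<forall>A. A \<subseteq> \<Omega> \<longrightarrow> P A B = sum (l k0) (A \<inter> B) / sum (l k0) B"
proof -
  have nn: "\<And>k w. 0 \<le> l k w" using rep_nn[OF r] .
  have cov: "\<forall>w\<in>\<Omega>. \<exists>k<card \<Omega>. 0 < l k w" using rep_cov[OF r] by blast
  have rp: "\<forall>A B. A \<subseteq> \<Omega> \<longrightarrow> B \<subseteq> \<Omega> \<longrightarrow> B \<noteq> {} \<longrightarrow> P A B = lpsP l A B"
    using rep_eq[OF r] by blast
  have cov': "\<forall>w\<in>\<Omega>. \<exists>k. 0 < l k w" using cov by blast
  define k0 where "k0 = (LEAST k. 0 < sum (l k) B)"
  note L = lps_first[OF nn cov' fin B, folded k0_def]
  have a: "0 < sum (l k0) B" using L by (rule conjunct1)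
  have b: "\<forall>k<k0. \<forall>w\<in>B. l k w = 0" using L by (rule conjunct2)
  have finB: "finite B" using fin B finite_subset by auto
  obtain w where w: "w \<in> B" using B by auto
  then obtain k where k: "k < card \<Omega>" "0 < l k w" using cov B by auto
  have "0 < sum (l k) B" by (rule sum_pos2[OF finB w, of "l k"]) (use nn k in auto)
  then have "k0 \<le> k" unfolding k0_def by (rule Least_le)
  then have c: "k0 < card \<Omega>" using k by simp
  have z: "\<forall>k<k0. sum (l k) B = 0" using b by (auto intro: sum.neutral)
  have d: "\<forall>A. A \<subseteq> \<Omega> \<longrightarrow> P A B = sum (l k0) (A \<inter> B) / sum (l k0) B"
    using rp B lps_eq[OF z a] by auto
  show ?thesis using that a b c d by blast
qed

lemma divmod_lt:
  fixes n i0 j0 k :: nat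
  assumes "j0 < n" "k < i0 * n + j0"
  shows "k div n < i0 \<or> (k div n = i0 \<and> k mod n < j0)"
proof -
  have n: "0 < n" using assms by simp
  have k: "k = (k div n) * n + k mod n" by simp
  have m: "k mod n < n" using n by simp
  show ?thesis
  proof (rule ccontr)
    assume "\<not> ?thesis"
    then have "i0 < k div n \<or> (k div n = i0 \<and> j0 \<le> k mod n)" by auto
    then show False
    proof
      assume "i0 < k div n"
      then have "(i0 + 1) * n \<le> (k div n) * n" by (intro mult_right_mono) auto
      then have a: "i0 * n + n \<le> (k div n) * n" by (simp add: algebra_simps)
      have b: "(k div n) * n \<le> k" by (rule div_times_less_eq_dividend)
      show False using a b assms by linarith
    next
      assume h: "k div n = i0 \<and> j0 \<le> k mod n"
      then have "k = i0 * n + k mod n" using k by simp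
      then show False using assms h by linarith
    qed
  qed
qed

locale prodsp =
  fixes G T S :: "'n set" and Xs :: "'n \<Rightarrow> 'v set"
  assumes TS: "T \<inter> S = {}" "T \<union> S = G" and finG: "finite G"
    and Xfin: "\<forall>n\<in>G. finite (Xs n) \<and> Xs n \<noteq> {}"
begin

abbreviation "Wt \<equiv> PiE T Xs"
abbreviation "Ws \<equiv> PiE S Xs"
abbreviation "Wg \<equiv> PiE G Xs"

definition join :: "('n \<Rightarrow> 'v) \<Rightarrow> ('n \<Rightarrow> 'v) \<Rightarrow> ('n \<Rightarrow> 'v)" where
  "join x y = (\<lambda>n. if n \<in> S then y n else x n)"

definition gset :: "('n \<Rightarrow> 'v) set \<Rightarrow> (('n \<Rightarrow> 'v) \<Rightarrow> ('n \<Rightarrow> 'v) set) \<Rightarrow> ('n \<Rightarrow> 'v) set" where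
  "gset E W = {z \<in> Wg. restrict z T \<in> E \<and> restrict z S \<in> W (restrict z T)}"

lemma finT: "finite T" and finS: "finite S" using TS finG by auto

lemma finWt: "finite Wt" using finT Xfin TS by (intro finite_PiE) auto
lemma finWs: "finite Ws" using finS Xfin TS by (intro finite_PiE) auto
lemma finWg: "finite Wg" using finG Xfin by (intro finite_PiE) auto
lemma neWt: "Wt \<noteq> {}" using Xfin TS by (auto simp: PiE_eq_empty_iff)
lemma neWs: "Ws \<noteq> {}" using Xfin TS by (auto simp: PiE_eq_empty_iff)

lemma join_in: "x \<in> Wt \<Longrightarrow> y \<in> Ws \<Longrightarrow> join x y \<in> Wg"
  using TS unfolding join_def by (auto simp: PiE_def Pi_def extensional_def)

lemma restrict_join_T: "x \<in> Wt \<Longrightarrow> restrict (join x y) T = x"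
  using TS unfolding join_def by (intro ext) (auto simp: PiE_def extensional_def restrict_def)

lemma restrict_join_S: "y \<in> Ws \<Longrightarrow> restrict (join x y) S = y"
  using TS unfolding join_def by (intro ext) (auto simp: PiE_def extensional_def restrict_def)

lemma join_restrict: "z \<in> Wg \<Longrightarrow> join (restrict z T) (restrict z S) = z"
  using TS unfolding join_def by (intro ext) (auto simp: PiE_def extensional_def restrict_def)

lemma restrict_T_in: "z \<in> Wg \<Longrightarrow> restrict z T \<in> Wt"
  using TS by (auto simp: PiE_def Pi_def)

lemma restrict_S_in: "z \<in> Wg \<Longrightarrow> restrict z S \<in> Ws"
  using TS by (auto simp: PiE_def Pi_def)

lemma gset_image: 
  assumes "E \<subseteq> Wt" "\<forall>x\<in>E. W x \<subseteq> Ws"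
  shows "gset E W = (\<lambda>(x,y). join x y) ` Sigma E W"
proof
  show "gset E W \<subseteq> (\<lambda>(x,y). join x y) ` Sigma E W"
  proof
    fix z assume "z \<in> gset E W"
    then have z: "z \<in> Wg" "restrict z T \<in> E" "restrict z S \<in> W (restrict z T)"
      unfolding gset_def by auto
    then show "z \<in> (\<lambda>(x,y). join x y) ` Sigma E W"
      using join_restrict[OF z(1)] by (intro image_eqI[of _ _ "(restrict z T, restrict z S)"]) auto
  qed
  show "(\<lambda>(x,y). join x y) ` Sigma E W \<subseteq> gset E W"
  proof
    fix z assume "z \<in> (\<lambda>(x,y). join x y) ` Sigma E W"
    then obtain x y where xy: "x \<in> E" "y \<in> W x" "z = join x y" by auto
    have x: "x \<in> Wt" using xy(1) assms(1) by blast
    have y: "y \<in> Ws" using xy(1,2) assms(2) by blast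
    show "z \<in> gset E W" unfolding gset_def
      using xy join_in[OF x y] restrict_join_T[OF x] restrict_join_S[OF y] by auto
  qed
qed

lemma sum_gset:
  assumes E: "E \<subseteq> Wt" and W: "\<forall>x\<in>E. W x \<subseteq> Ws"
  shows "sum h (gset E W) = (\<Sum>x\<in>E. \<Sum>y\<in>W x. h (join x y))"
proof -
  have inj: "inj_on (\<lambda>(x,y). join x y) (Sigma E W)"
  proof (rule inj_onI)
    fix a b assume a: "a \<in> Sigma E W" and b: "b \<in> Sigma E W"
      and eq: "(\<lambda>(x,y). join x y) a = (\<lambda>(x,y). join x y) b"
    obtain x y where a': "a = (x,y)" "x \<in> Wt" "y \<in> Ws" using a E W by force
    obtain x' y' where b': "b = (x',y')" "x' \<in> Wt" "y' \<in> Ws" using b E W by force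
    have "join x y = join x' y'" using eq a' b' by simp
    then have "x = x'" "y = y'"
      using restrict_join_T[OF a'(2)] restrict_join_T[OF b'(2)]
        restrict_join_S[OF a'(3)] restrict_join_S[OF b'(3)] by metis+
    then show "a = b" using a' b' by simp
  qed
  have finE: "finite E" using E finWt finite_subset by auto
  have finW: "\<forall>x\<in>E. finite (W x)" using W finWs by (meson finite_subset)
  have "sum h (gset E W) = sum (h \<circ> (\<lambda>(x,y). join x y)) (Sigma E W)"
    unfolding gset_image[OF E W] by (rule sum.reindex[OF inj])
  also have "\<dots> = (\<Sum>x\<in>E. \<Sum>y\<in>W x. h (join x y))"
    using sum.Sigma[OF finE finW, of "\<lambda>x y. h (join x y)"] by (simp add: case_prod_unfold o_def)
  finally show ?thesis .
qed

lemma gset_all: "gset Wt (\<lambda>_. Ws) = Wg"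
  unfolding gset_def using restrict_T_in restrict_S_in by auto

lemma gset_sub: "gset E W \<subseteq> Wg" unfolding gset_def by auto

lemma gset_Int: "gset E W \<inter> gset E' W' = gset (E \<inter> E') (\<lambda>x. W x \<inter> W' x)"
  unfolding gset_def by auto

lemma gset_ne:
  assumes "x \<in> E" "E \<subseteq> Wt" "y \<in> W x" "W x \<subseteq> Ws"
  shows "gset E W \<noteq> {}"
proof -
  have x: "x \<in> Wt" and y: "y \<in> Ws" using assms by auto
  have "join x y \<in> gset E W" unfolding gset_def
    using assms join_in[OF x y] restrict_join_T[OF x] restrict_join_S[OF y] by simp
  then show ?thesis by auto
qed

end

locale comb = prodsp G T S Xs for G T S :: "'n set" and Xs :: "'n \<Rightarrow> 'v set" +
  fixes PT :: "('n \<Rightarrow> 'v) set \<Rightarrow> ('n \<Rightarrow> 'v) set \<Rightarrow> real"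
    and Q :: "('n \<Rightarrow> 'v) \<Rightarrow> ('n \<Rightarrow> 'v) set \<Rightarrow> ('n \<Rightarrow> 'v) set \<Rightarrow> real"
  assumes PT: "full_cond_prob Wt PT" and Qf: "\<forall>x\<in>Wt. full_cond_prob Ws (Q x)"
begin

definition "p = layerfun Wt PT"
definition "q x = layerfun Ws (Q x)"
definition "nn = card Ws"
definition "r k z = p (k div nn) (restrict z T) * q (restrict z T) (k mod nn) (restrict z S)"
definition "cP = lpsP r"

lemma p_rep: "is_rep Wt PT p" unfolding p_def by (rule fcp_rep[OF PT finWt])
lemma q_rep: "x \<in> Wt \<Longrightarrow> is_rep Ws (Q x) (q x)" unfolding q_def using Qf by (intro fcp_rep finWs) auto

lemma p_nn: "0 \<le> p k x" using rep_nn[OF p_rep] .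
lemma q_nn: "x \<in> Wt \<Longrightarrow> 0 \<le> q x k y" using rep_nn[OF q_rep] .
lemma nn_pos: "0 < nn" unfolding nn_def using finWs neWs by (simp add: card_gt_0_iff)

lemma q0_sum: "x \<in> Wt \<Longrightarrow> sum (q x 0) Ws = 1"
  using rep_sum0[OF _ finWs neWs q_rep] Qf by auto

lemma r_nn: "z \<in> Wg \<Longrightarrow> 0 \<le> r k z"
  unfolding r_def using p_nn q_nn restrict_T_in by (intro mult_nonneg_nonneg) auto

lemma rsum:
  assumes E: "E \<subseteq> Wt" and W: "\<forall>x\<in>E. W x \<subseteq> Ws"
  shows "sum (r k) (gset E W) = (\<Sum>x\<in>E. p (k div nn) x * sum (q x (k mod nn)) (W x))"
proof -
  have "sum (r k) (gset E W) = (\<Sum>x\<in>E. \<Sum>y\<in>W x. r k (join x y))" by (rule sum_gset[OF E W])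
  also have "\<dots> = (\<Sum>x\<in>E. \<Sum>y\<in>W x. p (k div nn) x * q x (k mod nn) y)"
  proof (intro sum.cong refl)
    fix x y assume "x \<in> E" "y \<in> W x"
    then have x: "x \<in> Wt" and y: "y \<in> Ws" using E W by blast+
    show "r k (join x y) = p (k div nn) x * q x (k mod nn) y"
      unfolding r_def restrict_join_T[OF x] restrict_join_S[OF y] ..
  qed
  also have "\<dots> = (\<Sum>x\<in>E. p (k div nn) x * sum (q x (k mod nn)) (W x))"
    by (simp add: sum_distrib_left)
  finally show ?thesis .
qed

lemma cP_fcp: "full_cond_prob Wg cP"
proof -
  have cov: "\<forall>z\<in>Wg. \<exists>k. 0 < r k z"
  proof
    fix z assume z: "z \<in> Wg"
    define x where "x = restrict z T"
    define y where "y = restrict z S"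
    have x: "x \<in> Wt" and y: "y \<in> Ws" using z restrict_T_in restrict_S_in x_def y_def by auto
    obtain i where i: "0 < p i x" using rep_cov[OF p_rep x] by blast
    obtain j where j: "j < card Ws" "0 < q x j y" using rep_cov[OF q_rep[OF x] y] by blast
    have dm: "(i * nn + j) div nn = i" "(i * nn + j) mod nn = j" using j nn_pos unfolding nn_def by auto
    have "r (i * nn + j) z = p i x * q x j y"
      unfolding r_def x_def[symmetric] y_def[symmetric] dm ..
    then have "0 < r (i * nn + j) z" using i j by simp
    then show "\<exists>k. 0 < r k z" by blast
  qed
  define r' where "r' k z = (if z \<in> Wg then r k z else 0)" for k z
  have nn': "\<And>k z. 0 \<le> r' k z" unfolding r'_def using r_nn by simp
  have cov': "\<forall>z\<in>Wg. \<exists>k. 0 < r' k z" using cov unfolding r'_def by simp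
  have eq: "lpsP r' A B = lpsP r A B" if "B \<subseteq> Wg" for A B
  proof -
    have "sum (r' k) X = sum (r k) X" if "X \<subseteq> B" for X k
      using that \<open>B \<subseteq> Wg\<close> unfolding r'_def by (intro sum.cong) auto
    then show ?thesis unfolding lpsP_def by simp
  qed
  have F: "full_cond_prob Wg (lpsP r')" by (rule lps_fcp[OF nn' cov' finWg])
  show ?thesis unfolding full_cond_prob_def cP_def
  proof (intro conjI allI impI)
    fix B assume B: "B \<subseteq> Wg" "B \<noteq> {}"
    note F1 = fcpD1[OF F B]
    have e2: "\<And>A. lpsP r A B = lpsP r' A B" using eq B by simp
    show "\<And>A. A \<subseteq> Wg \<Longrightarrow> 0 \<le> lpsP r A B" using F1(1) e2 by simp
    show "lpsP r Wg B = 1" using F1(2) e2 by simp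
    show "lpsP r B B = 1" using F1(3) e2 by simp
    show "\<And>A A'. A \<subseteq> Wg \<Longrightarrow> A' \<subseteq> Wg \<Longrightarrow> A \<inter> A' = {} \<Longrightarrow> lpsP r (A \<union> A') B = lpsP r A B + lpsP r A' B"
      using F1(4) e2 by simp
  next
    fix A B C assume A: "A \<subseteq> Wg" and B: "B \<subseteq> Wg" and C: "C \<subseteq> Wg" and CB: "C \<inter> B \<noteq> {}"
    have "lpsP r' (A \<inter> C) B = lpsP r' A (C \<inter> B) * lpsP r' C B" by (rule fcpD2[OF F A B C CB])
    moreover have CB': "C \<inter> B \<subseteq> Wg" using B by auto
    ultimately show "lpsP r (A \<inter> C) B = lpsP r A (C \<inter> B) * lpsP r C B"
      using eq[OF B] eq[OF CB'] by simp
  qed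
qed

lemma sum_pq0:
  assumes "B \<subseteq> Wt"
  shows "(\<Sum>x\<in>B. p i x * sum (q x 0) Ws) = sum (p i) B"
  using q0_sum assms by (intro sum.cong) auto

lemma comb_a:
  assumes A: "A \<subseteq> Wt" and B: "B \<subseteq> Wt" "B \<noteq> {}"
  shows "cP (gset A (\<lambda>_. Ws)) (gset B (\<lambda>_. Ws)) = PT A B"
proof -
  obtain i0 where pos: "0 < sum (p i0) B" and zer: "\<forall>i<i0. \<forall>x\<in>B. p i x = 0"
    and "i0 < card Wt"
    and eqPT: "\<forall>A. A \<subseteq> Wt \<longrightarrow> PT A B = sum (p i0) (A \<inter> B) / sum (p i0) B"
    by (rule rep_first[OF p_rep finWt B])
  have Ws: "\<forall>x\<in>X. Ws \<subseteq> Ws" for X :: "('n \<Rightarrow> 'v) set" by simp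
  have sk: "sum (r k) (gset X (\<lambda>_. Ws)) = (\<Sum>x\<in>X. p (k div nn) x * sum (q x (k mod nn)) Ws)"
    if "X \<subseteq> Wt" for X k using rsum[OF that Ws] .
  have z: "\<forall>k<i0 * nn. sum (r k) (gset B (\<lambda>_. Ws)) = 0"
  proof (intro allI impI)
    fix k assume "k < i0 * nn"
    then have "k div nn < i0" using nn_pos by (simp add: less_mult_imp_div_less)
    then show "sum (r k) (gset B (\<lambda>_. Ws)) = 0" unfolding sk[OF B(1)] using zer by simp
  qed
  have d: "(i0 * nn) div nn = i0" "(i0 * nn) mod nn = 0" using nn_pos by auto
  have s0: "sum (r (i0 * nn)) (gset X (\<lambda>_. Ws)) = sum (p i0) X" if "X \<subseteq> Wt" for X
    unfolding sk[OF that] d using sum_pq0[OF that] .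
  have "cP (gset A (\<lambda>_. Ws)) (gset B (\<lambda>_. Ws)) =
      sum (r (i0 * nn)) (gset A (\<lambda>_. Ws) \<inter> gset B (\<lambda>_. Ws)) / sum (r (i0 * nn)) (gset B (\<lambda>_. Ws))"
    unfolding cP_def by (rule lps_eq[OF z]) (use s0[OF B(1)] pos in simp)
  also have "gset A (\<lambda>_. Ws) \<inter> gset B (\<lambda>_. Ws) = gset (A \<inter> B) (\<lambda>_. Ws)"
    unfolding gset_Int by simp
  also have "sum (r (i0 * nn)) (gset (A \<inter> B) (\<lambda>_. Ws)) / sum (r (i0 * nn)) (gset B (\<lambda>_. Ws))
      = sum (p i0) (A \<inter> B) / sum (p i0) B"
    using s0[of "A \<inter> B"] s0[OF B(1)] B by auto
  finally show ?thesis using eqPT A by simp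
qed

lemma comb_b:
  assumes x: "x \<in> Wt" and A: "A \<subseteq> Ws" and B: "B \<subseteq> Ws" "B \<noteq> {}"
  shows "cP (gset {x} (\<lambda>_. A)) (gset {x} (\<lambda>_. B)) = Q x A B"
proof -
  obtain i0 where pos: "0 < sum (p i0) {x}" and zer: "\<forall>i<i0. \<forall>x'\<in>{x}. p i x' = 0"
    and "i0 < card Wt" and "\<forall>A. A \<subseteq> Wt \<longrightarrow> PT A {x} = sum (p i0) (A \<inter> {x}) / sum (p i0) {x}"
    by (rule rep_first[OF p_rep finWt, of "{x}"]) (use x in auto)
  obtain j0 where qpos: "0 < sum (q x j0) B" and qzer: "\<forall>j<j0. \<forall>y\<in>B. q x j y = 0"
    and j0: "j0 < card Ws"
    and eqQ: "\<forall>A. A \<subseteq> Ws \<longrightarrow> Q x A B = sum (q x j0) (A \<inter> B) / sum (q x j0) B"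
    by (rule rep_first[OF q_rep[OF x] finWs B])
  have j0': "j0 < nn" using j0 unfolding nn_def .
  have sk: "sum (r k) (gset {x} (\<lambda>_. Y)) = p (k div nn) x * sum (q x (k mod nn)) Y"
    if "Y \<subseteq> Ws" for Y k using rsum[of "{x}" "\<lambda>_. Y" k] x that by simp
  have z: "\<forall>k<i0 * nn + j0. sum (r k) (gset {x} (\<lambda>_. B)) = 0"
  proof (intro allI impI)
    fix k assume "k < i0 * nn + j0"
    then have "k div nn < i0 \<or> (k div nn = i0 \<and> k mod nn < j0)" using divmod_lt j0' by blast
    then show "sum (r k) (gset {x} (\<lambda>_. B)) = 0"
    proof
      assume "k div nn < i0" then show ?thesis unfolding sk[OF B(1)] using zer by simp
    next
      assume "k div nn = i0 \<and> k mod nn < j0"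
      then have "sum (q x (k mod nn)) B = 0" using qzer by (intro sum.neutral) auto
      then show ?thesis unfolding sk[OF B(1)] by simp
    qed
  qed
  have d: "(i0 * nn + j0) div nn = i0" "(i0 * nn + j0) mod nn = j0" using j0' by auto
  have p0: "0 < p i0 x" using pos by simp
  have "cP (gset {x} (\<lambda>_. A)) (gset {x} (\<lambda>_. B)) =
      sum (r (i0 * nn + j0)) (gset {x} (\<lambda>_. A) \<inter> gset {x} (\<lambda>_. B)) / sum (r (i0 * nn + j0)) (gset {x} (\<lambda>_. B))"
    unfolding cP_def by (rule lps_eq[OF z]) (use sk[OF B(1)] d p0 qpos in simp)
  also have "gset {x} (\<lambda>_. A) \<inter> gset {x} (\<lambda>_. B) = gset {x} (\<lambda>_. A \<inter> B)"
    unfolding gset_Int by simp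
  also have "sum (r (i0 * nn + j0)) (gset {x} (\<lambda>_. A \<inter> B)) / sum (r (i0 * nn + j0)) (gset {x} (\<lambda>_. B))
      = sum (q x j0) (A \<inter> B) / sum (q x j0) B"
  proof -
    have AB: "A \<inter> B \<subseteq> Ws" using A by auto
    show ?thesis unfolding sk[OF AB] sk[OF B(1)] d using p0 by simp
  qed
  finally show ?thesis using eqQ A by simp
qed

lemma comb_d:
  assumes A: "A \<subseteq> Wt" and E: "E \<subseteq> Wt" "E \<noteq> {}" and W: "W \<subseteq> Ws" "W \<noteq> {}"
    and Qc: "\<forall>x\<in>E. \<forall>x'\<in>E. Q x = Q x'"
  shows "cP (gset A (\<lambda>_. Ws)) (gset E (\<lambda>_. W)) = PT A E"
proof -
  obtain x0 where x0: "x0 \<in> E" using E by auto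
  have x0': "x0 \<in> Wt" using x0 E by auto
  have qc: "\<forall>x\<in>E. q x = q x0"
  proof
    fix x assume "x \<in> E"
    then have "Q x = Q x0" using Qc x0 by blast
    then show "q x = q x0" unfolding q_def by simp
  qed
  obtain i0 where pos: "0 < sum (p i0) E" and zer: "\<forall>i<i0. \<forall>x\<in>E. p i x = 0"
    and "i0 < card Wt"
    and eqPT: "\<forall>A. A \<subseteq> Wt \<longrightarrow> PT A E = sum (p i0) (A \<inter> E) / sum (p i0) E"
    by (rule rep_first[OF p_rep finWt E])
  obtain j0 where qpos: "0 < sum (q x0 j0) W" and qzer: "\<forall>j<j0. \<forall>y\<in>W. q x0 j y = 0"
    and j0: "j0 < card Ws" and "\<forall>A. A \<subseteq> Ws \<longrightarrow> Q x0 A W = sum (q x0 j0) (A \<inter> W) / sum (q x0 j0) W"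
    by (rule rep_first[OF q_rep[OF x0'] finWs W])
  have j0': "j0 < nn" using j0 unfolding nn_def .
  have sk: "sum (r k) (gset X (\<lambda>_. W)) = sum (p (k div nn)) X * sum (q x0 (k mod nn)) W"
    if "X \<subseteq> E" for X k
  proof -
    have "sum (r k) (gset X (\<lambda>_. W)) = (\<Sum>x\<in>X. p (k div nn) x * sum (q x (k mod nn)) W)"
      using rsum[of X "\<lambda>_. W" k] that E W by auto
    also have "\<dots> = (\<Sum>x\<in>X. p (k div nn) x * sum (q x0 (k mod nn)) W)"
      using qc that by (intro sum.cong) auto
    finally show ?thesis by (simp add: sum_distrib_right)
  qed
  have z: "\<forall>k<i0 * nn + j0. sum (r k) (gset E (\<lambda>_. W)) = 0"
  proof (intro allI impI)
    fix k assume "k < i0 * nn + j0"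
    then have "k div nn < i0 \<or> (k div nn = i0 \<and> k mod nn < j0)" using divmod_lt j0' by blast
    then show "sum (r k) (gset E (\<lambda>_. W)) = 0"
    proof
      assume "k div nn < i0"
      then have "sum (p (k div nn)) E = 0" using zer by (intro sum.neutral) auto
      then show ?thesis unfolding sk[OF order_refl] by simp
    next
      assume "k div nn = i0 \<and> k mod nn < j0"
      then have "sum (q x0 (k mod nn)) W = 0" using qzer by (intro sum.neutral) auto
      then show ?thesis unfolding sk[OF order_refl] by simp
    qed
  qed
  have d: "(i0 * nn + j0) div nn = i0" "(i0 * nn + j0) mod nn = j0" using j0' by auto
  have "cP (gset A (\<lambda>_. Ws)) (gset E (\<lambda>_. W)) =
      sum (r (i0 * nn + j0)) (gset A (\<lambda>_. Ws) \<inter> gset E (\<lambda>_. W)) / sum (r (i0 * nn + j0)) (gset E (\<lambda>_. W))"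
    unfolding cP_def by (rule lps_eq[OF z]) (use sk[OF order_refl] d pos qpos in simp)
  also have "gset A (\<lambda>_. Ws) \<inter> gset E (\<lambda>_. W) = gset (A \<inter> E) (\<lambda>_. W)"
    unfolding gset_Int using W(1) by (simp add: Int_absorb1)
  also have "sum (r (i0 * nn + j0)) (gset (A \<inter> E) (\<lambda>_. W)) / sum (r (i0 * nn + j0)) (gset E (\<lambda>_. W))
      = sum (p i0) (A \<inter> E) / sum (p i0) E"
    using sk[of "A \<inter> E"] sk[OF order_refl] d qpos by auto
  finally show ?thesis using eqPT A by simp
qed

lemma comb_c:
  assumes x: "x \<in> Wt" and y: "y \<in> Ws"
  shows "cP {join x y} Wg = PT {x} Wt * Q x {y} Ws"
proof -
  have s: "sum (r 0) Wg = 1"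
  proof -
    have "sum (r 0) Wg = (\<Sum>x\<in>Wt. p 0 x * sum (q x 0) Ws)"
      using rsum[of Wt "\<lambda>_. Ws" 0] unfolding gset_all by simp
    also have "\<dots> = sum (p 0) Wt" by (rule sum_pq0) simp
    also have "\<dots> = 1" by (rule rep_sum0[OF PT finWt neWt p_rep])
    finally show ?thesis .
  qed
  have "cP {join x y} Wg = sum (r 0) ({join x y} \<inter> Wg) / sum (r 0) Wg"
    unfolding cP_def by (rule lps_eq) (use s in simp_all)
  also have "\<dots> = r 0 (join x y)" using join_in[OF x y] s by simp
  also have "\<dots> = p 0 x * q x 0 y" unfolding r_def restrict_join_T[OF x] restrict_join_S[OF y] by simp
  also have "\<dots> = PT {x} Wt * Q x {y} Ws" using rep_l0[OF p_rep x] rep_l0[OF q_rep[OF x] y] by simp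
  finally show ?thesis .
qed

end

lemma trancl_into_closed:
  assumes cl: "\<forall>a b. (a,b) \<in> R \<longrightarrow> b \<in> Y \<longrightarrow> a \<in> Y"
    and ab: "(a,b) \<in> R\<^sup>+" and b: "b \<in> Y"
  shows "(a,b) \<in> (R \<inter> Y \<times> Y)\<^sup>+"
  using ab b
proof (induction rule: trancl_induct)
  case (base y)
  then show ?case using cl by auto
next
  case (step y z)
  have yY: "y \<in> Y" using cl step.hyps(2) step.prems by blast
  have ay: "(a,y) \<in> (R \<inter> Y \<times> Y)\<^sup>+" using step.IH yY by blast
  have yz: "(y,z) \<in> R \<inter> Y \<times> Y" using step.hyps(2) yY step.prems by blast
  show ?case by (rule trancl_into_trancl[OF ay yz])
qed

lemma trancl_from_closed:
  assumes cl: "\<forall>a b. (a,b) \<in> R \<longrightarrow> a \<in> X \<longrightarrow> b \<in> X"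
    and ab: "(a,b) \<in> R\<^sup>+" and a: "a \<in> X"
  shows "(a,b) \<in> (R \<inter> X \<times> X)\<^sup>+ \<and> b \<in> X"
  using ab
proof (induction rule: trancl_induct)
  case (base y)
  then show ?case using cl a by auto
next
  case (step y z)
  have ay: "(a,y) \<in> (R \<inter> X \<times> X)\<^sup>+" and yX: "y \<in> X" using step.IH by auto
  have zX: "z \<in> X" using cl step.hyps(2) yX by blast
  have yz: "(y,z) \<in> R \<inter> X \<times> X" using step.hyps(2) yX zX by blast
  show ?case using trancl_into_trancl[OF ay yz] zX by simp
qed

lemma trancl_Int_sub: "(a,b) \<in> (R \<inter> X \<times> X)\<^sup>+ \<Longrightarrow> (a,b) \<in> R\<^sup>+ \<and> b \<in> X"
proof (induction rule: trancl_induct)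
  case (base y) then show ?case by auto
next
  case (step y z)
  then have "(a,y) \<in> R\<^sup>+" "(y,z) \<in> R" "z \<in> X" by auto
  then show ?case by auto
qed

lemma cn_finite: "credal_network G Pa Xs M \<Longrightarrow> finite G"
  unfolding credal_network_def by blast
lemma cn_pa: "credal_network G Pa Xs M \<Longrightarrow> s \<in> G \<Longrightarrow> Pa s \<subseteq> G"
  unfolding credal_network_def by blast
lemma cn_acyc: "credal_network G Pa Xs M \<Longrightarrow> s \<in> G \<Longrightarrow> \<not> strictly_below G Pa s s"
  unfolding credal_network_def by blast
lemma cn_X: "credal_network G Pa Xs M \<Longrightarrow> s \<in> G \<Longrightarrow> finite (Xs s) \<and> Xs s \<noteq> {}"
  unfolding credal_network_def by blast

lemma edges_sub:
  "dag_edges K (\<lambda>u. Pa u \<inter> K) = dag_edges G Pa \<inter> K \<times> K" if "K \<subseteq> G"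
  using that unfolding dag_edges_def by auto

lemma desc_def2: "descendants K P t = {v. (t,v) \<in> (dag_edges K P)\<^sup>+}"
  unfolding descendants_def strictly_below_def by simp

lemma cond_event_ne:
  assumes K: "K \<subseteq> D" and x: "x \<in> PiE K Xs" and ne: "\<forall>n\<in>D. Xs n \<noteq> {}"
  shows "cond_event (PiE D Xs) K x \<noteq> {}"
proof -
  define z where "z n = (if n \<in> K then x n else if n \<in> D then (SOME v. v \<in> Xs n) else undefined)" for n
  have "z \<in> PiE D Xs" using K x ne unfolding z_def by (auto simp: PiE_def Pi_def some_in_eq extensional_def)
  moreover have "\<forall>t\<in>K. z t = x t" unfolding z_def by simp
  ultimately show ?thesis unfolding cond_event_def by blast
qed

lemma cond_event_restrict: "K \<subseteq> K' \<Longrightarrow> cond_event \<Omega> K (restrict x K') = cond_event \<Omega> K x"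
  unfolding cond_event_def by auto

locale netsplit =
  fixes G T S :: "'n set" and Pa :: "'n \<Rightarrow> 'n set" and Xs :: "'n \<Rightarrow> 'v set"
    and M :: "'n \<Rightarrow> ('n \<Rightarrow> 'v) \<Rightarrow> ('v \<Rightarrow> real) set"
  assumes net: "credal_network G Pa Xs M"
    and TS: "T \<inter> S = {}" "T \<union> S = G" and paT: "\<forall>t\<in>T. Pa t \<subseteq> T"
begin

sublocale prodsp G T S Xs
  using TS cn_finite[OF net] cn_X[OF net] by unfold_locales auto

abbreviation "R \<equiv> dag_edges G Pa"
abbreviation "N u \<equiv> nondesc G Pa u"
abbreviation "NT u \<equiv> nondesc T (\<lambda>u. Pa u \<inter> T) u"
abbreviation "NS u \<equiv> nondesc S (\<lambda>u. Pa u \<inter> S) u"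
abbreviation "D u \<equiv> descendants G Pa u"

lemma TG: "T \<subseteq> G" and SG: "S \<subseteq> G" using TS by auto

lemma edgeD: "(a,b) \<in> R \<Longrightarrow> b \<in> G \<and> a \<in> Pa b \<and> a \<in> G"
  unfolding dag_edges_def using cn_pa[OF net] by auto

lemma into_T: "\<forall>a b. (a,b) \<in> R \<longrightarrow> b \<in> T \<longrightarrow> a \<in> T"
  using edgeD paT by blast

lemma from_S: "\<forall>a b. (a,b) \<in> R \<longrightarrow> a \<in> S \<longrightarrow> b \<in> S"
  using edgeD into_T TS by blast

lemma D_sub: "D u \<subseteq> G"
proof
  fix v assume "v \<in> D u"
  then have "(u,v) \<in> R\<^sup>+" unfolding desc_def2 by simp
  then obtain w where "(w,v) \<in> R" by (meson tranclE)
  then show "v \<in> G" using edgeD by blast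
qed

lemma desc_T:
  assumes t: "t \<in> T" shows "descendants T (\<lambda>u. Pa u \<inter> T) t = D t \<inter> T"
  unfolding desc_def2 edges_sub[OF TG]
proof (intro set_eqI iffI)
  fix v assume "v \<in> {v. (t, v) \<in> (R \<inter> T \<times> T)\<^sup>+}"
  then show "v \<in> {v. (t, v) \<in> R\<^sup>+} \<inter> T" using trancl_Int_sub by fastforce
next
  fix v assume "v \<in> {v. (t, v) \<in> R\<^sup>+} \<inter> T"
  then have "(t, v) \<in> R\<^sup>+" "v \<in> T" by auto
  from trancl_into_closed[OF into_T this] show "v \<in> {v. (t, v) \<in> (R \<inter> T \<times> T)\<^sup>+}" by simp
qed

lemma desc_S:
  assumes s: "s \<in> S" shows "descendants S (\<lambda>u. Pa u \<inter> S) s = D s"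
  unfolding desc_def2 edges_sub[OF SG]
proof (intro set_eqI iffI)
  fix v assume "v \<in> {v. (s, v) \<in> (R \<inter> S \<times> S)\<^sup>+}"
  then show "v \<in> {v. (s, v) \<in> R\<^sup>+}" using trancl_Int_sub by fastforce
next
  fix v assume "v \<in> {v. (s, v) \<in> R\<^sup>+}"
  then have "(s, v) \<in> R\<^sup>+" by simp
  from trancl_from_closed[OF from_S this s] show "v \<in> {v. (s, v) \<in> (R \<inter> S \<times> S)\<^sup>+}" by simp
qed

lemma D_S: "s \<in> S \<Longrightarrow> D s \<subseteq> S"
proof
  fix v assume s: "s \<in> S" and "v \<in> D s"
  then have "(s, v) \<in> R\<^sup>+" unfolding desc_def2 by simp
  from trancl_from_closed[OF from_S this s] show "v \<in> S" by simp
qed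

lemma NT_eq: "t \<in> T \<Longrightarrow> NT t = N t \<inter> T"
  unfolding nondesc_def desc_T using TG by auto

lemma N_S: "s \<in> S \<Longrightarrow> N s = T \<union> NS s"
  unfolding nondesc_def desc_S using D_S TS by auto

lemma NS_sub: "NS s \<subseteq> S" unfolding nondesc_def by auto
lemma NT_sub: "NT s \<subseteq> T" unfolding nondesc_def by auto

lemma pa_nd: "u \<in> G \<Longrightarrow> p \<in> Pa u \<Longrightarrow> p \<in> N u"
proof -
  assume u: "u \<in> G" and p: "p \<in> Pa u"
  have e: "(p,u) \<in> R" using u p unfolding dag_edges_def by auto
  have pG: "p \<in> G" using cn_pa[OF net u] p by auto
  have "p \<noteq> u" using cn_acyc[OF net u] e unfolding strictly_below_def by auto
  moreover have "p \<notin> D u"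
  proof
    assume "p \<in> D u"
    then have "(u,p) \<in> R\<^sup>+" unfolding desc_def2 by simp
    then have "(u,u) \<in> R\<^sup>+" using e by simp
    then show False using cn_acyc[OF net u] unfolding strictly_below_def by simp
  qed
  ultimately show "p \<in> N u" unfolding nondesc_def using pG by auto
qed

abbreviation "MT \<equiv> (\<lambda>u y. M u (restrict (\<lambda>t. if t \<in> T then y t else undefined) (Pa u)))"
abbreviation "MSx x \<equiv> (\<lambda>u y. M u (restrict (\<lambda>t. if t \<in> S then y t else restrict x (parents_of_set Pa S) t) (Pa u)))"

lemma evS:
  assumes u: "u \<in> S"
  shows "cond_event Wg (N u) x' = gset {restrict x' T} (\<lambda>_. cond_event Ws (NS u) x')"
proof -
  have NN: "N u = T \<union> NS u" by (rule N_S[OF u])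
  have eqT: "restrict z T = restrict x' T \<longleftrightarrow> (\<forall>t\<in>T. z t = x' t)" for z
    by (auto simp: fun_eq_iff restrict_def)
  show ?thesis
    unfolding cond_event_def gset_def NN using NS_sub[of u] restrict_S_in eqT by auto
qed

lemma evT1:
  assumes u: "u \<in> T" and SD: "S \<subseteq> D u"
  shows "N u = NT u" "cond_event Wg (NT u) x' = gset (cond_event Wt (NT u) x') (\<lambda>_. Ws)"
proof -
  show NN: "N u = NT u" unfolding NT_eq[OF u] unfolding nondesc_def using SD TS by auto
  show "cond_event Wg (NT u) x' = gset (cond_event Wt (NT u) x') (\<lambda>_. Ws)"
  proof (intro set_eqI iffI)
    fix z assume "z \<in> cond_event Wg (NT u) x'"
    then have z: "z \<in> Wg" "\<forall>t\<in>NT u. z t = x' t" unfolding cond_event_def by auto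
    have "restrict z T \<in> cond_event Wt (NT u) x'"
      unfolding cond_event_def using restrict_T_in[OF z(1)] z(2) NT_sub[of u] by auto
    then show "z \<in> gset (cond_event Wt (NT u) x') (\<lambda>_. Ws)"
      unfolding gset_def using z(1) restrict_S_in[OF z(1)] by blast
  next
    fix z assume "z \<in> gset (cond_event Wt (NT u) x') (\<lambda>_. Ws)"
    then have z: "z \<in> Wg" "restrict z T \<in> cond_event Wt (NT u) x'" unfolding gset_def by auto
    have "\<forall>t\<in>NT u. z t = x' t"
    proof
      fix t assume t: "t \<in> NT u"
      then have "restrict z T t = x' t" using z(2) unfolding cond_event_def by auto
      then show "z t = x' t" using t NT_sub[of u] by auto
    qed
    then show "z \<in> cond_event Wg (NT u) x'" unfolding cond_event_def using z(1) by blast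
  qed
qed

lemma evT2:
  assumes u: "u \<in> T" and SD: "S \<inter> D u = {}"
  shows "N u = NT u \<union> S"
    "cond_event Wg (NT u \<union> S) x' = gset (cond_event Wt (NT u) x') (\<lambda>_. {restrict x' S})"
proof -
  have uS: "u \<notin> S" using u TS by auto
  show NN: "N u = NT u \<union> S" unfolding NT_eq[OF u] unfolding nondesc_def using SD TS uS by auto
  have eqS: "restrict z S = restrict x' S \<longleftrightarrow> (\<forall>t\<in>S. z t = x' t)" for z
    by (auto simp: fun_eq_iff restrict_def)
  show "cond_event Wg (NT u \<union> S) x' = gset (cond_event Wt (NT u) x') (\<lambda>_. {restrict x' S})"
    unfolding cond_event_def gset_def using NT_sub[of u] restrict_T_in eqS by auto
qed

lemma ext_set:
  assumes u: "u \<in> T"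
  shows "{z \<in> Wg. z u = v} = gset {w \<in> Wt. w u = v} (\<lambda>_. Ws)"
  unfolding gset_def using u restrict_T_in restrict_S_in by auto

lemma sset:
  assumes u: "u \<in> S"
  shows "{z \<in> Wg. z u = v} \<inter> gset X (\<lambda>_. C) = gset X (\<lambda>_. {y \<in> Ws. y u = v}) \<inter> gset X (\<lambda>_. C)"
  unfolding gset_def using u restrict_S_in by auto

lemma modT:
  assumes u: "u \<in> T"
  shows "MT u (restrict x' (Pa u \<inter> T)) = M u (restrict x' (Pa u))"
proof -
  have "restrict (\<lambda>t. if t \<in> T then restrict x' (Pa u \<inter> T) t else undefined) (Pa u) = restrict x' (Pa u)"
    using paT u by (auto simp: fun_eq_iff restrict_def)
  then show ?thesis by simp
qed

lemma modS:
  assumes u: "u \<in> S"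
  shows "MSx (restrict x' T) u (restrict (restrict x' (NS u)) (Pa u \<inter> S)) = M u (restrict x' (Pa u))"
proof -
  have uG: "u \<in> G" using u SG by auto
  have "restrict (\<lambda>t. if t \<in> S then restrict (restrict x' (NS u)) (Pa u \<inter> S) t
          else restrict (restrict x' T) (parents_of_set Pa S) t) (Pa u) = restrict x' (Pa u)"
  proof (rule ext)
    fix t
    show "restrict (\<lambda>t. if t \<in> S then restrict (restrict x' (NS u)) (Pa u \<inter> S) t
          else restrict (restrict x' T) (parents_of_set Pa S) t) (Pa u) t = restrict x' (Pa u) t"
    proof (cases "t \<in> Pa u")
      case True
      have tN: "t \<in> N u" using pa_nd[OF uG True] .
      show ?thesis
      proof (cases "t \<in> S")
        case tS: True
        have "t \<in> NS u" using tN N_S[OF u] tS TS by auto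
        then show ?thesis using True tS by simp
      next
        case tS: False
        have "t \<in> T" using True cn_pa[OF net uG] tS TS by auto
        moreover have "t \<in> parents_of_set Pa S" unfolding parents_of_set_def using True u tS by auto
        ultimately show ?thesis using True tS by simp
      qed
    qed simp
  qed
  then show ?thesis by simp
qed

lemma irrD:
  assumes "P \<in> irr_ext G' Pa' Xs M'"
  shows "full_cond_prob (PiE G' Xs) P"
    "\<And>u x. u \<in> G' \<Longrightarrow> x \<in> PiE (nondesc G' Pa' u) Xs \<Longrightarrow>
      (\<lambda>v. if v \<in> Xs u then P {z \<in> PiE G' Xs. z u = v} (cond_event (PiE G' Xs) (nondesc G' Pa' u) x) else 0)
        \<in> M' u (restrict x (Pa' u))"
  using assms unfolding irr_ext_def by auto

lemma restrict_in: "x \<in> PiE A Xs \<Longrightarrow> B \<subseteq> A \<Longrightarrow> restrict x B \<in> PiE B Xs"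
  by (auto simp: PiE_def Pi_def)

lemma comb_irr:
  assumes PT: "PT \<in> irr_ext T (\<lambda>u. Pa u \<inter> T) Xs MT"
    and Q: "\<forall>x\<in>Wt. Q x \<in> irr_ext S (\<lambda>u. Pa u \<inter> S) Xs (MSx x)"
    and cond: "\<forall>t\<in>T. S \<subseteq> D t \<or> (S \<inter> D t = {} \<and>
        (\<forall>x\<in>Wt. \<forall>x'\<in>Wt. (\<forall>u\<in>NT t. x u = x' u) \<longrightarrow> Q x = Q x'))"
  shows "\<exists>P\<in>irr_ext G Pa Xs M. \<forall>x\<in>Wt. \<forall>y\<in>Ws. P {join x y} Wg = PT {x} Wt * Q x {y} Ws"
proof -
  have PTf: "full_cond_prob Wt PT" using irrD(1)[OF PT] .
  have Qf: "\<forall>x\<in>Wt. full_cond_prob Ws (Q x)" using irrD(1) Q by blast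
  interpret C: comb G T S Xs PT Q using PTf Qf by unfold_locales
  have irr: "(\<lambda>v. if v \<in> Xs u then C.cP {z \<in> Wg. z u = v} (cond_event Wg (N u) x') else 0)
        \<in> M u (restrict x' (Pa u))" if uG: "u \<in> G" and x': "x' \<in> PiE (N u) Xs" for u x'
  proof (cases "u \<in> S")
    case u: True
    define xT where "xT = restrict x' T"
    define xS where "xS = restrict x' (NS u)"
    have xT: "xT \<in> Wt" unfolding xT_def using x' N_S[OF u] by (intro restrict_in) auto
    have xS: "xS \<in> PiE (NS u) Xs" unfolding xS_def using x' N_S[OF u] by (intro restrict_in) auto
    define C where "C = cond_event Ws (NS u) x'"
    have Ceq: "C = cond_event Ws (NS u) xS" unfolding C_def xS_def by (simp add: cond_event_restrict)
    have Cs: "C \<subseteq> Ws" unfolding C_def cond_event_def by auto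
    have Cne: "C \<noteq> {}" unfolding Ceq using NS_sub xS Xfin SG by (intro cond_event_ne) auto
    have ev: "cond_event Wg (N u) x' = gset {xT} (\<lambda>_. C)" unfolding C_def xT_def by (rule evS[OF u])
    have Bsub: "gset {xT} (\<lambda>_. C) \<subseteq> Wg" by (rule gset_sub)
    obtain y0 where "y0 \<in> C" using Cne by auto
    have Bne: "gset {xT} (\<lambda>_. C) \<noteq> {}" using gset_ne[of xT "{xT}" y0 "\<lambda>_. C"] \<open>y0 \<in> C\<close> xT Cs by auto
    have val: "C.cP {z \<in> Wg. z u = v} (cond_event Wg (N u) x') = Q xT {y \<in> Ws. y u = v} C" for v
    proof -
      have "C.cP {z \<in> Wg. z u = v} (gset {xT} (\<lambda>_. C))
          = C.cP ({z \<in> Wg. z u = v} \<inter> gset {xT} (\<lambda>_. C)) (gset {xT} (\<lambda>_. C))"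
        using fcp_int[OF C.cP_fcp _ Bsub Bne] by auto
      also have "\<dots> = C.cP (gset {xT} (\<lambda>_. {y \<in> Ws. y u = v}) \<inter> gset {xT} (\<lambda>_. C)) (gset {xT} (\<lambda>_. C))"
        unfolding sset[OF u] ..
      also have "\<dots> = C.cP (gset {xT} (\<lambda>_. {y \<in> Ws. y u = v})) (gset {xT} (\<lambda>_. C))"
        using fcp_int[OF C.cP_fcp gset_sub Bsub Bne] by simp
      also have "\<dots> = Q xT {y \<in> Ws. y u = v} C" by (rule C.comb_b[OF xT _ Cs Cne]) auto
      finally show ?thesis unfolding ev .
    qed
    have "(\<lambda>v. if v \<in> Xs u then Q xT {z \<in> Ws. z u = v} (cond_event Ws (NS u) xS) else 0)
        \<in> MSx xT u (restrict xS (Pa u \<inter> S))"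
      using irrD(2)[OF Q[rule_format, OF xT] u xS] .
    then show ?thesis unfolding val Ceq[symmetric] using modS[OF u, of x'] unfolding xT_def xS_def by simp
  next
    case uS: False
    then have u: "u \<in> T" using uG TS by auto
    have PTi: "\<And>x. x \<in> PiE (NT u) Xs \<Longrightarrow>
      (\<lambda>v. if v \<in> Xs u then PT {z \<in> Wt. z u = v} (cond_event Wt (NT u) x) else 0)
        \<in> MT u (restrict x (Pa u \<inter> T))"
      using irrD(2)[OF PT u] by simp
    define xN where "xN = restrict x' (NT u)"
    have xN: "xN \<in> PiE (NT u) Xs" unfolding xN_def using x' NT_eq[OF u] by (intro restrict_in) auto
    define E where "E = cond_event Wt (NT u) x'"
    have Eeq: "E = cond_event Wt (NT u) xN" unfolding E_def xN_def by (simp add: cond_event_restrict)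
    have Es: "E \<subseteq> Wt" unfolding E_def cond_event_def by auto
    have Ene: "E \<noteq> {}" unfolding Eeq using NT_sub xN Xfin TG by (intro cond_event_ne) auto
    have mod: "MT u (restrict xN (Pa u \<inter> T)) = M u (restrict x' (Pa u))"
    proof -
      have e: "restrict xN (Pa u \<inter> T) = restrict x' (Pa u \<inter> T)"
        unfolding xN_def using pa_nd[OF uG] NT_eq[OF u] by (auto simp: fun_eq_iff restrict_def)
      show ?thesis unfolding e by (rule modT[OF u])
    qed
    have At: "{w \<in> Wt. w u = v} \<subseteq> Wt" for v by auto
    have cu: "S \<subseteq> D u \<or> (S \<inter> D u = {} \<and>
        (\<forall>x\<in>Wt. \<forall>x'\<in>Wt. (\<forall>w\<in>NT u. x w = x' w) \<longrightarrow> Q x = Q x'))"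
      using bspec[OF cond u] .
    show ?thesis
    proof (cases "S \<subseteq> D u")
      case a: True
      have val: "C.cP {z \<in> Wg. z u = v} (cond_event Wg (N u) x') = PT {w \<in> Wt. w u = v} E" for v
        unfolding evT1(1)[OF u a] evT1(2)[OF u a] ext_set[OF u] E_def[symmetric]
        by (rule C.comb_a[OF At Es Ene])
      show ?thesis unfolding val Eeq using PTi[OF xN] mod by simp
    next
      case False
      from cu have bb: "S \<inter> D u = {} \<and>
        (\<forall>x\<in>Wt. \<forall>x'\<in>Wt. (\<forall>w\<in>NT u. x w = x' w) \<longrightarrow> Q x = Q x')"
      proof
        assume "S \<subseteq> D u" then show ?thesis using False by contradiction
      qed
      have b: "S \<inter> D u = {}"
        "\<forall>x\<in>Wt. \<forall>x'\<in>Wt. (\<forall>w\<in>NT u. x w = x' w) \<longrightarrow> Q x = Q x'" using bb by (rule conjunct1, rule conjunct2)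
      have W: "{restrict x' S} \<subseteq> Ws" using x' evT2(1)[OF u b(1)] by (auto intro: restrict_in)
      have Qc: "\<forall>x\<in>E. \<forall>x''\<in>E. Q x = Q x''"
      proof (intro ballI)
        fix x1 x2 assume "x1 \<in> E" "x2 \<in> E"
        then show "Q x1 = Q x2" using b(2) unfolding E_def cond_event_def by auto
      qed
      have val: "C.cP {z \<in> Wg. z u = v} (cond_event Wg (N u) x') = PT {w \<in> Wt. w u = v} E" for v
        unfolding evT2(1)[OF u b(1)] evT2(2)[OF u b(1)] ext_set[OF u] E_def[symmetric]
        by (rule C.comb_d[OF At Es Ene W _ Qc]) simp
      show ?thesis unfolding val Eeq using PTi[OF xN] mod by simp
    qed
  qed
  have "C.cP \<in> irr_ext G Pa Xs M"
    unfolding irr_ext_def using C.cP_fcp irr by blast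
  moreover have "\<forall>x\<in>Wt. \<forall>y\<in>Ws. C.cP {join x y} Wg = PT {x} Wt * Q x {y} Ws"
    using C.comb_c by blast
  ultimately show ?thesis by blast
qed

end

lemma sub_cn:
  assumes net: "credal_network G Pa Xs M" and K: "K \<subseteq> G"
    and x: "\<forall>u\<in>K. \<forall>t\<in>Pa u - K. x t \<in> Xs t"
  shows "credal_network K (\<lambda>u. Pa u \<inter> K) Xs
           (\<lambda>u y. M u (restrict (\<lambda>t. if t \<in> K then y t else x t) (Pa u)))"
proof -
  have finK: "finite K" using cn_finite[OF net] K finite_subset by auto
  have acyc: "\<not> strictly_below K (\<lambda>u. Pa u \<inter> K) u u" if u: "u \<in> K" for u
  proof
    assume "strictly_below K (\<lambda>u. Pa u \<inter> K) u u"
    then have "(u,u) \<in> (dag_edges G Pa \<inter> K \<times> K)\<^sup>+"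
      unfolding strictly_below_def edges_sub[OF K] .
    then have "(u,u) \<in> (dag_edges G Pa)\<^sup>+" using trancl_Int_sub by fast
    then show False using cn_acyc[OF net] u K unfolding strictly_below_def by auto
  qed
  have mods: "M u (restrict (\<lambda>t. if t \<in> K then y t else x t) (Pa u)) \<noteq> {} \<and>
      closed (M u (restrict (\<lambda>t. if t \<in> K then y t else x t) (Pa u))) \<and>
      convex_fun_set (M u (restrict (\<lambda>t. if t \<in> K then y t else x t) (Pa u))) \<and>
      (\<forall>p\<in>M u (restrict (\<lambda>t. if t \<in> K then y t else x t) (Pa u)). is_pmf_on (Xs u) p)"
    if u: "u \<in> K" and y: "y \<in> PiE (Pa u \<inter> K) Xs" for u y
  proof -
    have uG: "u \<in> G" using u K by auto
    have w: "restrict (\<lambda>t. if t \<in> K then y t else x t) (Pa u) \<in> PiE (Pa u) Xs"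
      using y x u by (auto simp: PiE_def Pi_def)
    have "\<forall>s\<in>G. \<forall>x\<in>PiE (Pa s) Xs. M s x \<noteq> {} \<and> closed (M s x) \<and> convex_fun_set (M s x) \<and>
        (\<forall>p\<in>M s x. is_pmf_on (Xs s) p)" using net unfolding credal_network_def by blast
    then show ?thesis using uG w by blast
  qed
  show ?thesis unfolding credal_network_def
    using finK acyc mods cn_X[OF net] K by auto
qed

lemma single_ne:
  assumes net: "credal_network {s} Pa Xs M"
  shows "irr_ext {s} Pa Xs M \<noteq> {}"
proof -
  let ?W = "PiE {s} Xs"
  have Pas: "Pa s = {}"
  proof -
    have "Pa s \<subseteq> {s}" using cn_pa[OF net] by auto
    moreover have "s \<notin> Pa s"
    proof
      assume "s \<in> Pa s"
      then have "(s,s) \<in> dag_edges {s} Pa" unfolding dag_edges_def by auto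
      then show False using cn_acyc[OF net] unfolding strictly_below_def by auto
    qed
    ultimately show ?thesis by auto
  qed
  have noedge: "dag_edges {s} Pa = {}" unfolding dag_edges_def using Pas by auto
  have nd: "nondesc {s} Pa s = {}" unfolding nondesc_def by auto
  have X: "finite (Xs s)" "Xs s \<noteq> {}" using cn_X[OF net] by auto
  have un: "(\<lambda>_. undefined) \<in> PiE (Pa s) Xs" unfolding Pas by simp
  have "\<forall>x\<in>PiE (Pa s) Xs. M s x \<noteq> {} \<and> (\<forall>p\<in>M s x. is_pmf_on (Xs s) p)"
    using net unfolding credal_network_def by blast
  then obtain m where m: "m \<in> M s (\<lambda>_. undefined)" "is_pmf_on (Xs s) m" using un by blast
  have mnn: "\<And>v. 0 \<le> m v" and m0: "\<And>v. v \<notin> Xs s \<Longrightarrow> m v = 0" and m1: "sum m (Xs s) = 1"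
    using m(2) unfolding is_pmf_on_def by auto
  define l where "l k z = (if k = (0::nat) then m (z s) else 1)" for k and z :: "'a \<Rightarrow> 'b"
  have lnn: "\<And>k z. 0 \<le> l k z" unfolding l_def using mnn by simp
  have cov: "\<forall>z\<in>?W. \<exists>k. 0 < l k z"
  proof
    fix z have "0 < l 1 z" unfolding l_def by simp
    then show "\<exists>k. 0 < l k z" by blast
  qed
  have finW: "finite ?W" using X by (intro finite_PiE) auto
  have F: "full_cond_prob ?W (lpsP l)" by (rule lps_fcp[OF lnn cov finW])
  define e where "e v = (\<lambda>n. if n = s then v else undefined)" for v :: 'b
  have bij: "bij_betw (\<lambda>z. z s) ?W (Xs s)"
  proof (rule bij_betw_imageI)
    show "inj_on (\<lambda>z. z s) ?W"
    proof (rule inj_onI)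
      fix x y assume x: "x \<in> ?W" and y: "y \<in> ?W" and e: "x s = y s"
      show "x = y"
      proof
        fix n show "x n = y n" using x y e by (cases "n = s") (auto simp: PiE_def extensional_def)
      qed
    qed
    show "(\<lambda>z. z s) ` ?W = Xs s"
    proof
      show "(\<lambda>z. z s) ` ?W \<subseteq> Xs s" by auto
      show "Xs s \<subseteq> (\<lambda>z. z s) ` ?W"
      proof
        fix v assume v: "v \<in> Xs s"
        have "e v \<in> ?W" using v unfolding e_def by (auto simp: PiE_def extensional_def)
        then show "v \<in> (\<lambda>z. z s) ` ?W" by (intro image_eqI[of _ _ "e v"]) (auto simp: e_def)
      qed
    qed
  qed
  have s0: "sum (l 0) ?W = 1"
    unfolding l_def using sum.reindex_bij_betw[OF bij, of m] m1 by simp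
  have val: "lpsP l A ?W = sum (l 0) (A \<inter> ?W)" for A
    using lps_eq[of 0 l ?W A] s0 by simp
  have single: "{z \<in> ?W. z s = v} = {e v}" if v: "v \<in> Xs s" for v
  proof
    show "{z \<in> ?W. z s = v} \<subseteq> {e v}"
      unfolding e_def by (auto simp: PiE_def extensional_def fun_eq_iff)
    show "{e v} \<subseteq> {z \<in> ?W. z s = v}" using v unfolding e_def by (auto simp: PiE_def extensional_def)
  qed
  have pm: "(\<lambda>v. if v \<in> Xs s then lpsP l {z \<in> ?W. z s = v} (cond_event ?W {} x) else 0) = m" for x
  proof
    fix v
    show "(if v \<in> Xs s then lpsP l {z \<in> ?W. z s = v} (cond_event ?W {} x) else 0) = m v"
    proof (cases "v \<in> Xs s")
      case True
      have ce: "cond_event ?W {} x = ?W" unfolding cond_event_def by simp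
      have "{z \<in> ?W. z s = v} \<inter> ?W = {e v}" using single[OF True] by auto
      then show ?thesis using True unfolding ce val by (simp add: l_def e_def)
    qed (simp add: m0)
  qed
  have r0: "restrict x {} = (\<lambda>_. undefined)" for x :: "'a \<Rightarrow> 'b" by (simp add: restrict_def)
  have "lpsP l \<in> irr_ext {s} Pa Xs M"
    unfolding irr_ext_def
  proof (intro CollectI conjI ballI)
    fix u x assume u: "u \<in> {s}"
    then have us: "u = s" by simp
    show "(\<lambda>v. if v \<in> Xs u then lpsP l {z \<in> ?W. z u = v} (cond_event ?W (nondesc {s} Pa u) x) else 0)
        \<in> M u (restrict x (Pa u))" unfolding us nd Pas r0 pm using m(1) .
  qed (rule F)
  then show ?thesis by auto
qed

lemma sink_ex:
  assumes net: "credal_network G Pa Xs M" and ne: "G \<noteq> {}"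
  shows "\<exists>s\<in>G. descendants G Pa s = {}"
proof -
  let ?R = "dag_edges G Pa"
  have RG: "?R \<subseteq> G \<times> G" unfolding dag_edges_def using cn_pa[OF net] by auto
  have finR: "finite ?R" using finite_subset[OF RG] cn_finite[OF net] by auto
  have acyc: "acyclic ?R" unfolding acyclic_def
  proof
    fix x show "(x,x) \<notin> ?R\<^sup>+"
    proof
      assume xx: "(x,x) \<in> ?R\<^sup>+"
      then have "x \<in> G" using trancl_subset_Sigma[OF RG] by auto
      then show False using cn_acyc[OF net] xx unfolding strictly_below_def by auto
    qed
  qed
  have wf: "wf (?R\<inverse>)" by (rule finite_acyclic_wf_converse[OF finR acyc])
  obtain x where "x \<in> G" using ne by auto
  then obtain s where s: "s \<in> G" "\<And>y. (y, s) \<in> ?R\<inverse> \<Longrightarrow> y \<notin> G" using wfE_min[OF wf] by metis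
  have "descendants G Pa s = {}"
  proof (rule ccontr)
    assume "descendants G Pa s \<noteq> {}"
    then obtain v where "(s,v) \<in> ?R\<^sup>+" unfolding desc_def2 by auto
    then obtain y where "(s,y) \<in> ?R" by (meson tranclD)
    then show False using s(2)[of y] RG by auto
  qed
  then show ?thesis using s(1) by blast
qed

lemma irr_ne:
  assumes "credal_network G Pa Xs M"
  shows "irr_ext G Pa Xs M \<noteq> {}"
  using assms
proof (induction "card G" arbitrary: G Pa M rule: less_induct)
  case less
  note net = less.prems
  show ?case
  proof (cases "G = {}")
    case True
    define l where "l k z = (1::real)" for k :: nat and z :: "'a \<Rightarrow> 'b"
    have F: "full_cond_prob (PiE G Xs) (lpsP l)"
      by (rule lps_fcp) (auto simp: l_def True)
    have "lpsP l \<in> irr_ext G Pa Xs M" unfolding irr_ext_def using F True by simp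
    then show ?thesis by auto
  next
    case Gne: False
    obtain s where sG: "s \<in> G" and sink: "descendants G Pa s = {}" using sink_ex[OF net Gne] by blast
    show ?thesis
    proof (cases "G = {s}")
      case True
      then show ?thesis using single_ne net by simp
    next
      case False
      define T where "T = G - {s}"
      have noedge: "s \<notin> Pa t" if "t \<in> G" for t
      proof
        assume "s \<in> Pa t"
        then have "(s,t) \<in> dag_edges G Pa" using that unfolding dag_edges_def by auto
        then have "t \<in> descendants G Pa s" unfolding desc_def2 by auto
        then show False using sink by simp
      qed
      have paT: "\<forall>t\<in>T. Pa t \<subseteq> T" unfolding T_def using noedge cn_pa[OF net] by blast
      interpret NS: netsplit G T "{s}" Pa Xs M
        using net sG paT unfolding T_def by unfold_locales auto
      have cT: "card T < card G" unfolding T_def using sG cn_finite[OF net] by (meson card_Diff1_less)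
      have cnT: "credal_network T (\<lambda>u. Pa u \<inter> T) Xs NS.MT"
        using sub_cn[OF net NS.TG, of "\<lambda>_. undefined"] paT by auto
      obtain PT where PT: "PT \<in> irr_ext T (\<lambda>u. Pa u \<inter> T) Xs NS.MT"
        using less.hyps[OF cT cnT] by blast
      define Q where "Q x = (SOME Q. Q \<in> irr_ext {s} (\<lambda>u. Pa u \<inter> {s}) Xs (NS.MSx x))" for x
      have Q: "\<forall>x\<in>NS.Wt. Q x \<in> irr_ext {s} (\<lambda>u. Pa u \<inter> {s}) Xs (NS.MSx x)"
      proof
        fix x assume x: "x \<in> NS.Wt"
        have c: "\<forall>u\<in>{s}. \<forall>t\<in>Pa u - {s}. restrict x (parents_of_set Pa {s}) t \<in> Xs t"
        proof (intro ballI)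
          fix u t assume u: "u \<in> {s}" and t: "t \<in> Pa u - {s}"
          have "t \<in> T" using t u cn_pa[OF net sG] unfolding T_def by auto
          moreover have "t \<in> parents_of_set Pa {s}" using t u unfolding parents_of_set_def by auto
          ultimately show "restrict x (parents_of_set Pa {s}) t \<in> Xs t" using x by auto
        qed
        have "credal_network {s} (\<lambda>u. Pa u \<inter> {s}) Xs (NS.MSx x)"
          using sub_cn[OF net _ c] sG by simp
        then have "irr_ext {s} (\<lambda>u. Pa u \<inter> {s}) Xs (NS.MSx x) \<noteq> {}" by (rule single_ne)
        then show "Q x \<in> irr_ext {s} (\<lambda>u. Pa u \<inter> {s}) Xs (NS.MSx x)"
          unfolding Q_def by (simp add: some_in_eq)
      qed
      have cond: "\<forall>t\<in>T. {s} \<subseteq> NS.D t \<or> ({s} \<inter> NS.D t = {} \<and>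
          (\<forall>x\<in>NS.Wt. \<forall>x'\<in>NS.Wt. (\<forall>u\<in>NS.NT t. x u = x' u) \<longrightarrow> Q x = Q x'))"
      proof
        fix t assume t: "t \<in> T"
        show "{s} \<subseteq> NS.D t \<or> ({s} \<inter> NS.D t = {} \<and>
          (\<forall>x\<in>NS.Wt. \<forall>x'\<in>NS.Wt. (\<forall>u\<in>NS.NT t. x u = x' u) \<longrightarrow> Q x = Q x'))"
        proof (cases "s \<in> NS.D t")
          case True then show ?thesis by simp
        next
          case sD: False
          have tG: "t \<in> G" using t unfolding T_def by auto
          have PN: "parents_of_set Pa {s} \<subseteq> NS.NT t"
          proof
            fix p assume "p \<in> parents_of_set Pa {s}"
            then have p: "p \<in> Pa s" "p \<noteq> s" unfolding parents_of_set_def by auto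
            have e: "(p,s) \<in> dag_edges G Pa" using p sG unfolding dag_edges_def by auto
            have pT: "p \<in> T" using p cn_pa[OF net sG] unfolding T_def by auto
            have "p \<noteq> t" using e sD unfolding desc_def2 by auto
            moreover have "p \<notin> NS.D t"
            proof
              assume "p \<in> NS.D t"
              then have "(t,p) \<in> (dag_edges G Pa)\<^sup>+" unfolding desc_def2 by simp
              then have "(t,s) \<in> (dag_edges G Pa)\<^sup>+" using e by simp
              then show False using sD unfolding desc_def2 by simp
            qed
            moreover have "p \<in> G" using pT unfolding T_def by auto
            ultimately have "p \<in> NS.N t" unfolding nondesc_def by auto
            then show "p \<in> NS.NT t" using NS.NT_eq[OF t] pT by simp
          qed
          have "Q x = Q x'" if x: "x \<in> NS.Wt" and x': "x' \<in> NS.Wt" and ag: "\<forall>u\<in>NS.NT t. x u = x' u" for x x'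
          proof -
            have eq: "restrict x (parents_of_set Pa {s}) = restrict x' (parents_of_set Pa {s})"
              using ag PN by (auto simp: restrict_def fun_eq_iff)
            show ?thesis unfolding Q_def eq ..
          qed
          then show ?thesis using sD by blast
        qed
      qed
      obtain P where "P \<in> irr_ext G Pa Xs M" using NS.comb_irr[OF PT Q cond] by blast
      then show ?thesis by auto
    qed
  qed
qed

lemma fcp_map:
  assumes P: "full_cond_prob \<Omega> P"
    and sub: "\<And>A. A \<subseteq> \<Omega>' \<Longrightarrow> \<phi> A \<subseteq> \<Omega>"
    and un: "\<And>A A'. A \<subseteq> \<Omega>' \<Longrightarrow> A' \<subseteq> \<Omega>' \<Longrightarrow> \<phi> (A \<union> A') = \<phi> A \<union> \<phi> A'"
    and int: "\<And>A A'. A \<subseteq> \<Omega>' \<Longrightarrow> A' \<subseteq> \<Omega>' \<Longrightarrow> \<phi> (A \<inter> A') = \<phi> A \<inter> \<phi> A'"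
    and em: "\<phi> {} = {}"
    and ne: "\<And>B. B \<subseteq> \<Omega>' \<Longrightarrow> B \<noteq> {} \<Longrightarrow> \<phi> B \<noteq> {}"
  shows "full_cond_prob \<Omega>' (\<lambda>A B. P (\<phi> A) (\<phi> B))"
proof -
  have P1: "\<forall>B. B \<subseteq> \<Omega>' \<longrightarrow> B \<noteq> {} \<longrightarrow>
        (\<forall>A. A \<subseteq> \<Omega>' \<longrightarrow> 0 \<le> P (\<phi> A) (\<phi> B)) \<and> P (\<phi> \<Omega>') (\<phi> B) = 1 \<and>
        (\<forall>A A'. A \<subseteq> \<Omega>' \<longrightarrow> A' \<subseteq> \<Omega>' \<longrightarrow> A \<inter> A' = {} \<longrightarrow> P (\<phi> (A \<union> A')) (\<phi> B) = P (\<phi> A) (\<phi> B) + P (\<phi> A') (\<phi> B)) \<and>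
        P (\<phi> B) (\<phi> B) = 1"
  proof (intro allI impI)
    fix B assume B: "B \<subseteq> \<Omega>'" "B \<noteq> {}"
    have B': "\<phi> B \<subseteq> \<Omega>" "\<phi> B \<noteq> {}" using sub ne B by auto
    note F = fcpD1[OF P B']
    have a: "\<forall>A. A \<subseteq> \<Omega>' \<longrightarrow> 0 \<le> P (\<phi> A) (\<phi> B)" using F(1) sub by blast
    have "P (\<phi> \<Omega>') (\<phi> B) = P (\<phi> \<Omega>' \<inter> \<phi> B) (\<phi> B)"
      using fcp_int[OF P sub[OF order_refl] B'] by simp
    also have "\<phi> \<Omega>' \<inter> \<phi> B = \<phi> B" using int[OF order_refl B(1)] B(1) by (simp add: Int_absorb1)
    finally have b: "P (\<phi> \<Omega>') (\<phi> B) = 1" using F(3) by simp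
    have c: "\<forall>A A'. A \<subseteq> \<Omega>' \<longrightarrow> A' \<subseteq> \<Omega>' \<longrightarrow> A \<inter> A' = {} \<longrightarrow>
        P (\<phi> (A \<union> A')) (\<phi> B) = P (\<phi> A) (\<phi> B) + P (\<phi> A') (\<phi> B)"
    proof (intro allI impI)
      fix A A' assume A: "A \<subseteq> \<Omega>'" "A' \<subseteq> \<Omega>'" "A \<inter> A' = {}"
      have "\<phi> A \<inter> \<phi> A' = {}" using int[OF A(1,2)] A(3) em by simp
      then show "P (\<phi> (A \<union> A')) (\<phi> B) = P (\<phi> A) (\<phi> B) + P (\<phi> A') (\<phi> B)"
        unfolding un[OF A(1,2)] using F(4) sub A by blast
    qed
    show "(\<forall>A. A \<subseteq> \<Omega>' \<longrightarrow> 0 \<le> P (\<phi> A) (\<phi> B)) \<and> P (\<phi> \<Omega>') (\<phi> B) = 1 \<and>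
        (\<forall>A A'. A \<subseteq> \<Omega>' \<longrightarrow> A' \<subseteq> \<Omega>' \<longrightarrow> A \<inter> A' = {} \<longrightarrow> P (\<phi> (A \<union> A')) (\<phi> B) = P (\<phi> A) (\<phi> B) + P (\<phi> A') (\<phi> B)) \<and>
        P (\<phi> B) (\<phi> B) = 1" using a b c F(3) by blast
  qed
  have P2: "\<forall>A B C. A \<subseteq> \<Omega>' \<longrightarrow> B \<subseteq> \<Omega>' \<longrightarrow> C \<subseteq> \<Omega>' \<longrightarrow> C \<inter> B \<noteq> {} \<longrightarrow>
        P (\<phi> (A \<inter> C)) (\<phi> B) = P (\<phi> A) (\<phi> (C \<inter> B)) * P (\<phi> C) (\<phi> B)"
  proof (intro allI impI)
    fix A B C assume A: "A \<subseteq> \<Omega>'" and B: "B \<subseteq> \<Omega>'" and C: "C \<subseteq> \<Omega>'" and CB: "C \<inter> B \<noteq> {}"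
    have CB': "\<phi> C \<inter> \<phi> B \<noteq> {}" using ne[of "C \<inter> B"] CB C int[OF C B] by auto
    show "P (\<phi> (A \<inter> C)) (\<phi> B) = P (\<phi> A) (\<phi> (C \<inter> B)) * P (\<phi> C) (\<phi> B)"
      unfolding int[OF A C] int[OF C B] by (rule fcpD2[OF P sub[OF A] sub[OF B] sub[OF C] CB'])
  qed
  show ?thesis unfolding full_cond_prob_def by (rule conjI[OF P1 P2])
qed

lemma bdd_vals:
  assumes fin: "finite \<Omega>" and F: "\<forall>P\<in>F. full_cond_prob \<Omega> P"
  shows "bdd_below {(\<Sum>z\<in>\<Omega>. h z * P {z} \<Omega>) | P. P \<in> F}"
proof (rule bdd_belowI)
  fix v assume "v \<in> {(\<Sum>z\<in>\<Omega>. h z * P {z} \<Omega>) | P. P \<in> F}"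
  then obtain P where P: "P \<in> F" and v: "v = (\<Sum>z\<in>\<Omega>. h z * P {z} \<Omega>)" by blast
  have "(\<Sum>z\<in>\<Omega>. - \<bar>h z\<bar>) \<le> (\<Sum>z\<in>\<Omega>. h z * P {z} \<Omega>)"
  proof (rule sum_mono)
    fix z assume z: "z \<in> \<Omega>"
    have b: "0 \<le> P {z} \<Omega>" "P {z} \<Omega> \<le> 1" using fcp_single_bounds[OF bspec[OF F P] fin z] by auto
    have "\<bar>h z * P {z} \<Omega>\<bar> \<le> \<bar>h z\<bar>"
      using b by (simp add: abs_mult mult_left_le)
    then show "- \<bar>h z\<bar> \<le> h z * P {z} \<Omega>" by linarith
  qed
  then show "(\<Sum>z\<in>\<Omega>. - \<bar>h z\<bar>) \<le> v" using v by simp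
qed

context netsplit
begin

lemma gset_Un1: "gset (A \<union> A') (\<lambda>_. Ws) = gset A (\<lambda>_. Ws) \<union> gset A' (\<lambda>_. Ws)"
  unfolding gset_def by auto
lemma gset_Un2: "gset {x} (\<lambda>_. A \<union> A') = gset {x} (\<lambda>_. A) \<union> gset {x} (\<lambda>_. A')"
  unfolding gset_def by auto

lemma marg_fcp:
  assumes P: "full_cond_prob Wg P"
  shows "full_cond_prob Wt (\<lambda>A B. P (gset A (\<lambda>_. Ws)) (gset B (\<lambda>_. Ws)))"
proof (rule fcp_map[OF P])
  show "\<And>A. A \<subseteq> Wt \<Longrightarrow> gset A (\<lambda>_. Ws) \<subseteq> Wg" by (rule gset_sub)
  show "\<And>A A'. gset (A \<union> A') (\<lambda>_. Ws) = gset A (\<lambda>_. Ws) \<union> gset A' (\<lambda>_. Ws)" by (rule gset_Un1)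
  show "\<And>A A'. gset (A \<inter> A') (\<lambda>_. Ws) = gset A (\<lambda>_. Ws) \<inter> gset A' (\<lambda>_. Ws)" by (simp add: gset_Int)
  show "gset {} (\<lambda>_. Ws) = {}" unfolding gset_def by simp
  show "\<And>B. B \<subseteq> Wt \<Longrightarrow> B \<noteq> {} \<Longrightarrow> gset B (\<lambda>_. Ws) \<noteq> {}"
  proof -
    fix B assume "B \<subseteq> Wt" "B \<noteq> {}"
    then obtain x where "x \<in> B" by auto
    obtain y where "y \<in> Ws" using neWs by auto
    show "gset B (\<lambda>_. Ws) \<noteq> {}" by (rule gset_ne) (use \<open>x \<in> B\<close> \<open>y \<in> Ws\<close> \<open>B \<subseteq> Wt\<close> in auto)
  qed
qed

lemma cond_fcp:
  assumes P: "full_cond_prob Wg P" and x: "x \<in> Wt"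
  shows "full_cond_prob Ws (\<lambda>A B. P (gset {x} (\<lambda>_. A)) (gset {x} (\<lambda>_. B)))"
proof (rule fcp_map[OF P])
  show "\<And>A. A \<subseteq> Ws \<Longrightarrow> gset {x} (\<lambda>_. A) \<subseteq> Wg" by (rule gset_sub)
  show "\<And>A A'. gset {x} (\<lambda>_. A \<union> A') = gset {x} (\<lambda>_. A) \<union> gset {x} (\<lambda>_. A')" by (rule gset_Un2)
  show "\<And>A A'. gset {x} (\<lambda>_. A \<inter> A') = gset {x} (\<lambda>_. A) \<inter> gset {x} (\<lambda>_. A')" by (simp add: gset_Int)
  show "gset {x} (\<lambda>_. {}) = {}" unfolding gset_def by simp
  show "\<And>B. B \<subseteq> Ws \<Longrightarrow> B \<noteq> {} \<Longrightarrow> gset {x} (\<lambda>_. B) \<noteq> {}"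
  proof -
    fix B assume "B \<subseteq> Ws" "B \<noteq> {}"
    then obtain y where "y \<in> B" by auto
    show "gset {x} (\<lambda>_. B) \<noteq> {}" by (rule gset_ne) (use \<open>y \<in> B\<close> \<open>B \<subseteq> Ws\<close> x in auto)
  qed
qed

lemma marg_irr:
  assumes SD: "\<forall>t\<in>T. S \<subseteq> D t" and P: "P \<in> irr_ext G Pa Xs M"
  shows "(\<lambda>A B. P (gset A (\<lambda>_. Ws)) (gset B (\<lambda>_. Ws))) \<in> irr_ext T (\<lambda>u. Pa u \<inter> T) Xs MT"
proof -
  have Pf: "full_cond_prob Wg P" using irrD(1)[OF P] .
  have irr: "(\<lambda>v. if v \<in> Xs u then P (gset {w \<in> Wt. w u = v} (\<lambda>_. Ws)) (gset (cond_event Wt (NT u) x) (\<lambda>_. Ws)) else 0)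
      \<in> MT u (restrict x (Pa u \<inter> T))" if u: "u \<in> T" and x: "x \<in> PiE (NT u) Xs" for u x
  proof -
    have uG: "u \<in> G" using u TG by auto
    have SDu: "S \<subseteq> D u" using SD u by blast
    have x': "x \<in> PiE (N u) Xs" using x evT1(1)[OF u SDu] by simp
    have "(\<lambda>v. if v \<in> Xs u then P {z \<in> Wg. z u = v} (cond_event Wg (N u) x) else 0) \<in> M u (restrict x (Pa u))"
      by (rule irrD(2)[OF P uG x'])
    then show ?thesis unfolding evT1(1)[OF u SDu] evT1(2)[OF u SDu] ext_set[OF u] modT[OF u] .
  qed
  show ?thesis unfolding irr_ext_def using marg_fcp[OF Pf] irr by blast
qed

lemma cond_irr:
  assumes P: "P \<in> irr_ext G Pa Xs M" and x: "x \<in> Wt"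
  shows "(\<lambda>A B. P (gset {x} (\<lambda>_. A)) (gset {x} (\<lambda>_. B))) \<in> irr_ext S (\<lambda>u. Pa u \<inter> S) Xs (MSx x)"
proof -
  have Pf: "full_cond_prob Wg P" using irrD(1)[OF P] .
  have irr: "(\<lambda>v. if v \<in> Xs u then P (gset {x} (\<lambda>_. {z \<in> Ws. z u = v})) (gset {x} (\<lambda>_. cond_event Ws (NS u) xS)) else 0)
      \<in> MSx x u (restrict xS (Pa u \<inter> S))" if u: "u \<in> S" and xS: "xS \<in> PiE (NS u) Xs" for u xS
  proof -
    have uG: "u \<in> G" using u SG by auto
    define x' where "x' = restrict (join x xS) (N u)"
    have NN: "N u = T \<union> NS u" by (rule N_S[OF u])
    have x': "x' \<in> PiE (N u) Xs"
      unfolding x'_def NN using x xS NS_sub[of u] TS by (auto simp: PiE_def Pi_def join_def)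
    have xT: "restrict x' T = x"
      unfolding x'_def NN using x TS by (auto simp: fun_eq_iff restrict_def join_def PiE_def extensional_def)
    have xS': "restrict x' (NS u) = xS"
      unfolding x'_def NN using xS NS_sub[of u] by (auto simp: fun_eq_iff restrict_def join_def PiE_def extensional_def)
    define C where "C = cond_event Ws (NS u) x'"
    have Ceq: "C = cond_event Ws (NS u) xS" unfolding C_def xS'[symmetric] by (simp add: cond_event_restrict)
    have Cs: "C \<subseteq> Ws" unfolding C_def cond_event_def by auto
    have Cne: "C \<noteq> {}" unfolding Ceq using NS_sub xS Xfin SG by (intro cond_event_ne) auto
    have ev: "cond_event Wg (N u) x' = gset {x} (\<lambda>_. C)" unfolding C_def xT[symmetric] by (rule evS[OF u])
    have Bsub: "gset {x} (\<lambda>_. C) \<subseteq> Wg" by (rule gset_sub)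
    obtain y0 where "y0 \<in> C" using Cne by auto
    have Bne: "gset {x} (\<lambda>_. C) \<noteq> {}" using gset_ne[of x "{x}" y0 "\<lambda>_. C"] \<open>y0 \<in> C\<close> x Cs by auto
    have val: "P {z \<in> Wg. z u = v} (cond_event Wg (N u) x') = P (gset {x} (\<lambda>_. {y \<in> Ws. y u = v})) (gset {x} (\<lambda>_. C))" for v
    proof -
      have "P {z \<in> Wg. z u = v} (gset {x} (\<lambda>_. C))
          = P ({z \<in> Wg. z u = v} \<inter> gset {x} (\<lambda>_. C)) (gset {x} (\<lambda>_. C))"
        using fcp_int[OF Pf _ Bsub Bne] by auto
      also have "\<dots> = P (gset {x} (\<lambda>_. {y \<in> Ws. y u = v}) \<inter> gset {x} (\<lambda>_. C)) (gset {x} (\<lambda>_. C))"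
        unfolding sset[OF u] ..
      also have "\<dots> = P (gset {x} (\<lambda>_. {y \<in> Ws. y u = v})) (gset {x} (\<lambda>_. C))"
        using fcp_int[OF Pf gset_sub Bsub Bne] by simp
      finally show ?thesis unfolding ev .
    qed
    have "(\<lambda>v. if v \<in> Xs u then P {z \<in> Wg. z u = v} (cond_event Wg (N u) x') else 0) \<in> M u (restrict x' (Pa u))"
      by (rule irrD(2)[OF P uG x'])
    then show ?thesis unfolding val modS[OF u, of x', symmetric] xT xS' Ceq .
  qed
  show ?thesis unfolding irr_ext_def using cond_fcp[OF Pf x] irr by blast
qed

lemma sum_split: "sum h Wg = (\<Sum>x\<in>Wt. \<Sum>y\<in>Ws. h (join x y))"
  using sum_gset[of Wt "\<lambda>_. Ws" h] unfolding gset_all by simp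

lemma val_split:
  fixes f a :: "('n \<Rightarrow> 'v) \<Rightarrow> real" and b :: "('n \<Rightarrow> 'v) \<Rightarrow> ('n \<Rightarrow> 'v) \<Rightarrow> real"
    and P :: "('n \<Rightarrow> 'v) set \<Rightarrow> ('n \<Rightarrow> 'v) set \<Rightarrow> real"
  assumes "\<forall>x\<in>Wt. \<forall>y\<in>Ws. P {join x y} Wg = a x * b x y"
  shows "(\<Sum>z\<in>Wg. f z * P {z} Wg) = (\<Sum>x\<in>Wt. a x * (\<Sum>y\<in>Ws. f (join x y) * b x y))"
  unfolding sum_split
proof (intro sum.cong refl)
  fix x assume x: "x \<in> Wt"
  have "(\<Sum>y\<in>Ws. f (join x y) * P {join x y} Wg) = (\<Sum>y\<in>Ws. a x * (f (join x y) * b x y))"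
  proof (intro sum.cong refl)
    fix y assume y: "y \<in> Ws"
    have "P {join x y} Wg = a x * b x y" using assms x y by blast
    then show "f (join x y) * P {join x y} Wg = a x * (f (join x y) * b x y)" by (simp add: algebra_simps)
  qed
  then show "(\<Sum>y\<in>Ws. f (join x y) * P {join x y} Wg) = a x * (\<Sum>y\<in>Ws. f (join x y) * b x y)"
    by (simp add: sum_distrib_left)
qed

lemma marg_prod:
  assumes Pf: "full_cond_prob Wg P" and x: "x \<in> Wt" and y: "y \<in> Ws"
  shows "P {join x y} Wg = P (gset {x} (\<lambda>_. Ws)) (gset Wt (\<lambda>_. Ws)) * P (gset {x} (\<lambda>_. {y})) (gset {x} (\<lambda>_. Ws))"
proof -
  have j: "{join x y} = gset {x} (\<lambda>_. {y})"
  proof (intro set_eqI iffI)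
    fix z assume "z \<in> {join x y}"
    then show "z \<in> gset {x} (\<lambda>_. {y})" unfolding gset_def
      using join_in[OF x y] restrict_join_T[OF x] restrict_join_S[OF y] by simp
  next
    fix z assume "z \<in> gset {x} (\<lambda>_. {y})"
    then have "z \<in> Wg" "restrict z T = x" "restrict z S = y" unfolding gset_def by auto
    then show "z \<in> {join x y}" using join_restrict by force
  qed
  have ne0: "gset {x} (\<lambda>_. Ws) \<noteq> {}" by (rule gset_ne[of x "{x}" y]) (use x y in auto)
  have ne: "gset {x} (\<lambda>_. Ws) \<inter> Wg \<noteq> {}" using ne0 gset_sub[of "{x}" "\<lambda>_. Ws"] by (simp add: Int_absorb2)
  have "P (gset {x} (\<lambda>_. {y}) \<inter> gset {x} (\<lambda>_. Ws)) Wg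
      = P (gset {x} (\<lambda>_. {y})) (gset {x} (\<lambda>_. Ws) \<inter> Wg) * P (gset {x} (\<lambda>_. Ws)) Wg"
    by (rule fcpD2[OF Pf gset_sub order_refl gset_sub ne])
  moreover have "gset {x} (\<lambda>_. {y}) \<inter> gset {x} (\<lambda>_. Ws) = gset {x} (\<lambda>_. {y})"
    using y unfolding gset_Int by simp
  moreover have "gset {x} (\<lambda>_. Ws) \<inter> Wg = gset {x} (\<lambda>_. Ws)" using gset_sub by auto
  ultimately show ?thesis unfolding j gset_all by simp
qed

end

theorem theorem3:
  fixes G S :: "'n set" and Pa :: "'n \<Rightarrow> 'n set" and Xs :: "'n \<Rightarrow> 'v set"
    and M :: "'n \<Rightarrow> ('n \<Rightarrow> 'v) \<Rightarrow> ('v \<Rightarrow> real) set"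
    and f :: "('n \<Rightarrow> 'v) \<Rightarrow> real"
  assumes net: "credal_network G Pa Xs M"
    and SG: "S \<subseteq> G"
    and order: "\<forall>t\<in>G - S. \<forall>s\<in>S. strictly_below G Pa t s"
  shows "lower_exp_irr G Pa Xs M f =
         sub_lower_exp G Pa Xs M (G - S) (\<lambda>_. undefined)
           (\<lambda>xT. sub_lower_exp G Pa Xs M S (restrict xT (parents_of_set Pa S))
                   (\<lambda>xS. f (\<lambda>n. if n \<in> S then xS n else xT n)))"
proof -
  define T where "T = G - S"
  have TS: "T \<inter> S = {}" "T \<union> S = G" using SG unfolding T_def by auto
  have paT: "\<forall>t\<in>T. Pa t \<subseteq> T"
  proof (intro ballI subsetI)
    fix t p assume t: "t \<in> T" and p: "p \<in> Pa t"
    have tG: "t \<in> G" using t T_def by auto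
    have pG: "p \<in> G" using cn_pa[OF net tG] p by auto
    show "p \<in> T"
    proof (rule ccontr)
      assume "p \<notin> T"
      then have pS: "p \<in> S" using pG T_def by auto
      have "(t,p) \<in> (dag_edges G Pa)\<^sup>+" using order t pS unfolding T_def strictly_below_def by auto
      moreover have "(p,t) \<in> dag_edges G Pa" using p tG unfolding dag_edges_def by auto
      ultimately have "(t,t) \<in> (dag_edges G Pa)\<^sup>+" by simp
      then show False using cn_acyc[OF net tG] unfolding strictly_below_def by simp
    qed
  qed
  interpret NS: netsplit G T S Pa Xs M using net TS paT by unfold_locales auto
  have SD: "\<forall>t\<in>T. S \<subseteq> NS.D t" using order unfolding T_def descendants_def by auto
  define FG where "FG = irr_ext G Pa Xs M"
  define FT where "FT = irr_ext T (\<lambda>u. Pa u \<inter> T) Xs NS.MT"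
  define FS where "FS x = irr_ext S (\<lambda>u. Pa u \<inter> S) Xs (NS.MSx x)" for x
  define inner where "inner x Q = (\<Sum>y\<in>NS.Ws. f (NS.join x y) * Q {y} NS.Ws)"
    for x and Q :: "('n \<Rightarrow> 'v) set \<Rightarrow> ('n \<Rightarrow> 'v) set \<Rightarrow> real"
  define g where "g x = Inf {inner x Q | Q. Q \<in> FS x}" for x
  define XG where "XG = {(\<Sum>z\<in>NS.Wg. f z * P {z} NS.Wg) | P. P \<in> FG}"
  define Y where "Y = {(\<Sum>x\<in>NS.Wt. g x * PT {x} NS.Wt) | PT. PT \<in> FT}"
  have lhs: "lower_exp_irr G Pa Xs M f = Inf XG"
    unfolding lower_exp_irr_def XG_def FG_def ..
  have rhs: "sub_lower_exp G Pa Xs M (G - S) (\<lambda>_. undefined)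
           (\<lambda>xT. sub_lower_exp G Pa Xs M S (restrict xT (parents_of_set Pa S))
                   (\<lambda>xS. f (\<lambda>n. if n \<in> S then xS n else xT n))) = Inf Y"
    unfolding Y_def g_def FT_def FS_def inner_def sub_lower_exp_def lower_exp_irr_def NS.join_def T_def ..
  have FGf: "\<forall>P\<in>FG. full_cond_prob NS.Wg P" unfolding FG_def using NS.irrD(1) by blast
  have FTf: "\<forall>P\<in>FT. full_cond_prob NS.Wt P" unfolding FT_def using NS.irrD(1) by blast
  have FSf: "\<forall>P\<in>FS x. full_cond_prob NS.Ws P" for x unfolding FS_def using NS.irrD(1) by blast
  have FGne: "FG \<noteq> {}" unfolding FG_def by (rule irr_ne[OF net])
  have FTne: "FT \<noteq> {}" unfolding FT_def
  proof (rule irr_ne)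
    show "credal_network T (\<lambda>u. Pa u \<inter> T) Xs NS.MT"
      using sub_cn[OF net NS.TG, of "\<lambda>_. undefined"] paT by auto
  qed
  have FSne: "FS x \<noteq> {}" if x: "x \<in> NS.Wt" for x unfolding FS_def
  proof (rule irr_ne)
    have c: "\<forall>u\<in>S. \<forall>t\<in>Pa u - S. restrict x (parents_of_set Pa S) t \<in> Xs t"
    proof (intro ballI)
      fix u t assume u: "u \<in> S" and t: "t \<in> Pa u - S"
      have "t \<in> T" using t u cn_pa[OF net] SG unfolding T_def by auto
      moreover have "t \<in> parents_of_set Pa S" using t u unfolding parents_of_set_def by auto
      ultimately show "restrict x (parents_of_set Pa S) t \<in> Xs t" using x by auto
    qed
    show "credal_network S (\<lambda>u. Pa u \<inter> S) Xs (NS.MSx x)" using sub_cn[OF net SG c] .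
  qed
  have bG: "bdd_below XG" unfolding XG_def by (rule bdd_vals[OF NS.finWg FGf])
  have bT: "bdd_below Y" unfolding Y_def by (rule bdd_vals[OF NS.finWt FTf])
  have bS: "bdd_below {inner x Q | Q. Q \<in> FS x}" for x
    unfolding inner_def by (rule bdd_vals[OF NS.finWs FSf])
  have XGne: "XG \<noteq> {}" unfolding XG_def using FGne by auto
  have Yne: "Y \<noteq> {}" unfolding Y_def using FTne by auto
  have sum1: "(\<Sum>x\<in>NS.Wt. PT {x} NS.Wt) = 1" if "full_cond_prob NS.Wt PT" for PT
    using fcp_sum[OF that NS.finWt order_refl NS.neWt order_refl] fcpD1(2)[OF that order_refl NS.neWt]
    by simp
  have le1: "Inf Y \<le> Inf XG"
  proof (rule cInf_greatest[OF XGne])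
    fix v assume "v \<in> XG"
    then obtain P where P: "P \<in> FG" and v: "v = (\<Sum>z\<in>NS.Wg. f z * P {z} NS.Wg)" unfolding XG_def by blast
    have Pf: "full_cond_prob NS.Wg P" using FGf P by blast
    define PT where "PT = (\<lambda>A B. P (NS.gset A (\<lambda>_. NS.Ws)) (NS.gset B (\<lambda>_. NS.Ws)))"
    define Q where "Q x = (\<lambda>A B. P (NS.gset {x} (\<lambda>_. A)) (NS.gset {x} (\<lambda>_. B)))" for x
    have PT: "PT \<in> FT" unfolding PT_def FT_def using NS.marg_irr[OF SD] P unfolding FG_def by blast
    have Q: "Q x \<in> FS x" if "x \<in> NS.Wt" for x
      unfolding Q_def FS_def using NS.cond_irr P that unfolding FG_def by blast
    have PTf: "full_cond_prob NS.Wt PT" using FTf PT by blast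
    have "v = (\<Sum>x\<in>NS.Wt. PT {x} NS.Wt * inner x (Q x))"
      unfolding v inner_def
    proof (rule NS.val_split)
      show "\<forall>x\<in>NS.Wt. \<forall>y\<in>NS.Ws. P {NS.join x y} NS.Wg = PT {x} NS.Wt * Q x {y} NS.Ws"
      proof (intro ballI)
        fix x y assume x: "x \<in> NS.Wt" and y: "y \<in> NS.Ws"
        show "P {NS.join x y} NS.Wg = PT {x} NS.Wt * Q x {y} NS.Ws"
          unfolding PT_def Q_def by (rule NS.marg_prod[OF Pf x y])
      qed
    qed
    also have "\<dots> \<ge> (\<Sum>x\<in>NS.Wt. g x * PT {x} NS.Wt)"
    proof (rule sum_mono)
      fix x assume x: "x \<in> NS.Wt"
      have "g x \<le> inner x (Q x)" unfolding g_def by (rule cInf_lower[OF _ bS]) (use Q[OF x] in blast)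
      moreover have "0 \<le> PT {x} NS.Wt" using fcp_single_bounds[OF PTf NS.finWt x] by simp
      ultimately show "g x * PT {x} NS.Wt \<le> PT {x} NS.Wt * inner x (Q x)"
        by (simp add: mult.commute[of "PT {x} NS.Wt"] mult_right_mono)
    qed
    finally have "(\<Sum>x\<in>NS.Wt. g x * PT {x} NS.Wt) \<le> v" .
    moreover have "Inf Y \<le> (\<Sum>x\<in>NS.Wt. g x * PT {x} NS.Wt)"
      by (rule cInf_lower[OF _ bT]) (use PT in \<open>auto simp: Y_def\<close>)
    ultimately show "Inf Y \<le> v" by linarith
  qed
  have le2: "Inf XG \<le> Inf Y"
  proof (rule cInf_greatest[OF Yne])
    fix v assume "v \<in> Y"
    then obtain PT where PT: "PT \<in> FT" and v: "v = (\<Sum>x\<in>NS.Wt. g x * PT {x} NS.Wt)" unfolding Y_def by blast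
    have PTf: "full_cond_prob NS.Wt PT" using FTf PT by blast
    show "Inf XG \<le> v"
    proof (rule field_le_epsilon)
      fix e :: real assume e: "0 < e"
      have "\<forall>x\<in>NS.Wt. \<exists>Q. Q \<in> FS x \<and> inner x Q < g x + e"
      proof
        fix x assume x: "x \<in> NS.Wt"
        have ne: "{inner x Q | Q. Q \<in> FS x} \<noteq> {}" using FSne[OF x] by auto
        have "Inf {inner x Q | Q. Q \<in> FS x} < g x + e" unfolding g_def using e by simp
        from cInf_lessD[OF ne this] show "\<exists>Q. Q \<in> FS x \<and> inner x Q < g x + e" by blast
      qed
      then obtain Qc where Qc: "\<forall>x\<in>NS.Wt. Qc x \<in> FS x \<and> inner x (Qc x) < g x + e" by metis
      have Qc1: "\<forall>x\<in>NS.Wt. Qc x \<in> irr_ext S (\<lambda>u. Pa u \<inter> S) Xs (NS.MSx x)"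
        using Qc unfolding FS_def by blast
      have cond: "\<forall>t\<in>T. S \<subseteq> NS.D t \<or> (S \<inter> NS.D t = {} \<and>
          (\<forall>x\<in>NS.Wt. \<forall>x'\<in>NS.Wt. (\<forall>u\<in>NS.NT t. x u = x' u) \<longrightarrow> Qc x = Qc x'))"
        using SD by blast
      obtain P where P: "P \<in> irr_ext G Pa Xs M"
        and Pv: "\<forall>x\<in>NS.Wt. \<forall>y\<in>NS.Ws. P {NS.join x y} NS.Wg = PT {x} NS.Wt * Qc x {y} NS.Ws"
        using NS.comb_irr[OF PT[unfolded FT_def] Qc1 cond] by blast
      have "Inf XG \<le> (\<Sum>z\<in>NS.Wg. f z * P {z} NS.Wg)"
        by (rule cInf_lower[OF _ bG]) (use P in \<open>auto simp: XG_def FG_def\<close>)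
      also have "\<dots> = (\<Sum>x\<in>NS.Wt. PT {x} NS.Wt * inner x (Qc x))"
        unfolding inner_def by (rule NS.val_split[of P "\<lambda>x. PT {x} NS.Wt" "\<lambda>x y. Qc x {y} NS.Ws", OF Pv])
      also have "\<dots> \<le> (\<Sum>x\<in>NS.Wt. PT {x} NS.Wt * (g x + e))"
      proof (rule sum_mono)
        fix x assume x: "x \<in> NS.Wt"
        have "0 \<le> PT {x} NS.Wt" using fcp_single_bounds[OF PTf NS.finWt x] by simp
        moreover have "inner x (Qc x) \<le> g x + e" using Qc x by auto
        ultimately show "PT {x} NS.Wt * inner x (Qc x) \<le> PT {x} NS.Wt * (g x + e)"
          by (rule mult_left_mono[rotated])
      qed
      also have "\<dots> = v + e * (\<Sum>x\<in>NS.Wt. PT {x} NS.Wt)"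
        unfolding v by (simp add: algebra_simps sum.distrib sum_distrib_left)
      also have "\<dots> = v + e" using sum1[OF PTf] by simp
      finally show "Inf XG \<le> v + e" .
    qed
  qed
  show ?thesis unfolding lhs rhs using le1 le2 by simp
qed

end
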